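(* Let $\mathcal H=\mathcal H_A\otimes\mathcal H_B\otimes\mathcal H_C\otimes\mathcal H_D$ with finite-dimensional factors, and let $|\Psi\rangle=|\psi\rangle\otimes|\phi\rangle$, where $|\psi\rangle$ is a unit vector in the tensor product of three of the four factors and $|\phi\rangle$ is a unit vector in the remaining factor. Then for all $\alpha,\beta>0$, $\langle\Psi|\rho_{AB}^\alpha\rho_{BC}^\beta|\Psi\rangle>0$; in particular $\omega_{\alpha,\beta}(|\Psi\rangle)=1$.
   Context: $\rho_R$ is the reduced density operator of $|\Psi\rangle\langle\Psi|$ on the factors in $R$ (acting as identity on the others), $AB$ means $A\cup B$, etc. Powers are defined by spectral calculus with $0^\alpha=0$. $\omega_{\alpha,\beta}=\langle\rho_{AB}^\alpha\rho_{BC}^\beta\rangle/|\langle\rho_{AB}^\alpha\rho_{BC}^\beta\rangle|$. *)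

theory Defs
  imports "HOL-Analysis.Analysis"
begin

text \<open>Vectors of H = H_A (x) H_B (x) H_C (x) H_D are represented in the product basis,
  i.e. as elements of complex ^ ('a * 'b * 'c * 'd) for finite index types 'a, 'b, 'c, 'd
  (the dimensions of the factors).\<close>

type_synonym ('a, 'b, 'c, 'd) state = "complex ^ ('a \<times> 'b \<times> 'c \<times> 'd)"
type_synonym ('a, 'b, 'c, 'd) oper =
  "complex ^ ('a \<times> 'b \<times> 'c \<times> 'd) ^ ('a \<times> 'b \<times> 'c \<times> 'd)"

text \<open>Reduced density operator of |Psi><Psi| on AB, acting as the identity on C and D:
  (rho_AB (x) I_CD)((a,b,c,d),(a',b',c',d')) = [c=c'][d=d'] sum_{x,y} Psi(a,b,x,y) conj Psi(a',b',x,y).\<close>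
definition rhoAB :: "('a::finite, 'b::finite, 'c::finite, 'd::finite) state \<Rightarrow> ('a, 'b, 'c, 'd) oper" where
  "rhoAB \<Psi> = (\<chi> i j. case (i, j) of ((a, b, c, d), (a', b', c', d')) \<Rightarrow>
      (if c = c' \<and> d = d'
       then (\<Sum>x\<in>UNIV. \<Sum>y\<in>UNIV. \<Psi> $ (a, b, x, y) * cnj (\<Psi> $ (a', b', x, y)))
       else 0))"

text \<open>Reduced density operator of |Psi><Psi| on BC, acting as the identity on A and D.\<close>
definition rhoBC :: "('a::finite, 'b::finite, 'c::finite, 'd::finite) state \<Rightarrow> ('a, 'b, 'c, 'd) oper" where
  "rhoBC \<Psi> = (\<chi> i j. case (i, j) of ((a, b, c, d), (a', b', c', d')) \<Rightarrow>
      (if a = a' \<and> d = d'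
       then (\<Sum>x\<in>UNIV. \<Sum>y\<in>UNIV. \<Psi> $ (x, b, c, y) * cnj (\<Psi> $ (x, b', c', y)))
       else 0))"

text \<open>Power of a (Hermitian, positive semidefinite) matrix by spectral calculus, with 0^alpha = 0:
  the operator acting on every eigenvector of M with eigenvalue l as multiplication by l^alpha.
  (For Hermitian M the eigenvectors span the space, so this determines the operator uniquely;
  eigenvalues are real, and Isabelle's powr satisfies 0 powr alpha = 0.)\<close>
definition mpow :: "complex ^ 'n ^ 'n \<Rightarrow> real \<Rightarrow> complex ^ 'n ^ 'n" where
  "mpow M \<alpha> = (THE X. \<forall>l v. M *v v = l *s v \<longrightarrow> X *v v = complex_of_real (Re l powr \<alpha>) *s v)"

definition expect :: "complex ^ 'n ^ 'n \<Rightarrow> complex ^ 'n \<Rightarrow> complex" where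
  "expect X \<Psi> = (\<Sum>i\<in>UNIV. cnj (\<Psi> $ i) * (X *v \<Psi>) $ i)"

definition omega :: "real \<Rightarrow> real \<Rightarrow> ('a::finite, 'b::finite, 'c::finite, 'd::finite) state \<Rightarrow> complex" where
  "omega \<alpha> \<beta> \<Psi> =
     (let z = expect (mpow (rhoAB \<Psi>) \<alpha> ** mpow (rhoBC \<Psi>) \<beta>) \<Psi> in z / complex_of_real (cmod z))"

end

theory Submission
  imports Defs
begin


definition cinner :: "complex^'n \<Rightarrow> complex^'n \<Rightarrow> complex" where
  "cinner v w = (\<Sum>i\<in>UNIV. cnj (v$i) * w$i)"

definition herm :: "complex^'n^'n \<Rightarrow> bool" where
  "herm M \<longleftrightarrow> (\<forall>i j. M$i$j = cnj (M$j$i))"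

lemma cinner_add_right: "cinner v (w + u) = cinner v w + cinner v u"
  by (simp add: cinner_def distrib_left sum.distrib)
lemma cinner_add_left: "cinner (w + u) v = cinner w v + cinner u v"
  by (simp add: cinner_def distrib_right sum.distrib)
lemma cinner_diff_right: "cinner v (w - u) = cinner v w - cinner v u"
  by (simp add: cinner_def right_diff_distrib sum_subtractf)
lemma cinner_diff_left: "cinner (w - u) v = cinner w v - cinner u v"
  by (simp add: cinner_def left_diff_distrib sum_subtractf)
lemma cinner_scale_right: "cinner v (c *s w) = c * cinner v w"
  by (simp add: cinner_def sum_distrib_left algebra_simps)
lemma cinner_scale_left: "cinner (c *s v) w = cnj c * cinner v w"
  by (simp add: cinner_def sum_distrib_left algebra_simps)
lemma cinner_zero_right[simp]: "cinner v 0 = 0"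
  by (simp add: cinner_def)
lemma cinner_zero_left[simp]: "cinner 0 v = 0"
  by (simp add: cinner_def)
lemma cinner_sum_right: "cinner v (\<Sum>s\<in>S. f s) = (\<Sum>s\<in>S. cinner v (f s))"
  by (induct S rule: infinite_finite_induct) (auto simp: cinner_add_right)
lemma cinner_sum_left: "cinner (\<Sum>s\<in>S. f s) v = (\<Sum>s\<in>S. cinner (f s) v)"
  by (induct S rule: infinite_finite_induct) (auto simp: cinner_add_left)
lemma cinner_commute: "cinner w v = cnj (cinner v w)"
  by (simp add: cinner_def mult.commute)
lemma cinner_self: "cinner v v = of_real (\<Sum>i\<in>UNIV. (cmod (v$i))\<^sup>2)"
proof -
  have "cinner v v = (\<Sum>i\<in>UNIV. of_real ((cmod (v$i))\<^sup>2))"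
    unfolding cinner_def by (intro sum.cong refl) (simp add: complex_norm_square mult.commute del: of_real_power)
  then show ?thesis by (simp del: of_real_power)
qed
lemma cinner_self_eq_0: "cinner v v = 0 \<longleftrightarrow> v = 0"
proof
  assume "cinner v v = 0"
  then have "(\<Sum>i\<in>UNIV. (cmod (v$i))\<^sup>2) = 0" unfolding cinner_self of_real_eq_0_iff .
  then have "\<forall>i\<in>UNIV. (cmod (v$i))\<^sup>2 = 0" by (subst (asm) sum_nonneg_eq_0_iff) auto
  then show "v = 0" by (simp add: vec_eq_iff)
qed simp
lemma cinner_self_Re: "Re (cinner v v) \<ge> 0" "Im (cinner v v) = 0"
  by (simp_all add: cinner_self sum_nonneg)

lemma matvec_scale: "(M::complex^'n^'m) *v (c *s v) = c *s (M *v v)"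
  by (simp add: vec_eq_iff matrix_vector_mult_def sum_distrib_left algebra_simps)
lemma matvec_sum: "(M::complex^'n^'m) *v (\<Sum>s\<in>S. f s) = (\<Sum>s\<in>S. M *v f s)"
  by (induct S rule: infinite_finite_induct) (auto simp: matrix_vector_right_distrib)

lemma herm_cinner: assumes "herm M" shows "cinner v (M *v w) = cinner (M *v v) w"
proof -
  have "cinner v (M *v w) = (\<Sum>i\<in>UNIV. \<Sum>j\<in>UNIV. cnj (v$i) * M$i$j * w$j)"
    by (simp add: cinner_def matrix_vector_mult_def sum_distrib_left mult.assoc)
  also have "\<dots> = (\<Sum>j\<in>UNIV. \<Sum>i\<in>UNIV. cnj (v$i) * M$i$j * w$j)"
    by (rule sum.swap)
  also have "\<dots> = cinner (M *v v) w"
  proof -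
    have "\<And>i j. cnj (M$j$i) = M$i$j" using assms unfolding herm_def by (metis complex_cnj_cnj)
    then show ?thesis
      by (simp add: cinner_def matrix_vector_mult_def sum_distrib_left cnj_sum mult.commute mult.left_commute)
  qed
  finally show ?thesis .
qed

lemma expect_cinner: "expect X \<Psi> = cinner \<Psi> (X *v \<Psi>)"
  by (simp add: expect_def cinner_def)


lemma cinner_norm: "cinner x x = of_real ((norm x)\<^sup>2)"
proof -
  have "(norm x)\<^sup>2 = (\<Sum>i\<in>UNIV. (cmod (x$i))\<^sup>2)"
    unfolding norm_vec_def L2_set_def by (simp add: sum_nonneg)
  then show ?thesis by (simp add: cinner_self del: of_real_power)
qed

lemma ofreal_scale: "(complex_of_real r *s x) = r *\<^sub>R (x::complex^'n)"
  apply (subst vec_eq_iff) apply (subst vector_scaleR_component) apply (simp add: scaleR_conv_of_real)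
  done

lemma cont_cinner: "continuous_on A (\<lambda>x::complex^'n. cinner s x)"
  "continuous_on A (\<lambda>x::complex^'n. Re (cinner x (M *v x)))"
proof -
  have cx: "\<And>i. continuous_on A (\<lambda>x::complex^'n. x$i)"
    by (rule linear_continuous_on) (rule bounded_linear_vec_nth)
  show "continuous_on A (\<lambda>x::complex^'n. cinner s x)"
    unfolding cinner_def by (intro continuous_on_sum continuous_on_mult continuous_on_const cx)
  show "continuous_on A (\<lambda>x::complex^'n. Re (cinner x (M *v x)))"
    unfolding cinner_def matrix_vector_mult_def vec_lambda_beta
    by (intro continuous_on_Re continuous_on_sum continuous_on_mult continuous_on_const continuous_on_cnj cx)
qed

lemma quad_lemma:
  fixes a b :: real
  assumes "\<forall>t. 0 \<le> 2 * t * b + t\<^sup>2 * a"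
  shows "b = 0"
proof (rule ccontr)
  assume b: "b \<noteq> 0"
  define c where "c = \<bar>a\<bar> + 1"
  have pos: "c > 0" by (simp add: c_def)
  define t where "t = - b / c"
  have tc: "t * c = - b" using pos by (simp add: t_def)
  have "(2*t*b + t\<^sup>2*a) * c\<^sup>2 = 2*b*(t*c)*c + (t*c)\<^sup>2 * a" by (simp add: power2_eq_square algebra_simps)
  also have "\<dots> = 2*b*(-b)*c + (-b)\<^sup>2 * a" by (simp only: tc)
  also have "\<dots> = b\<^sup>2 * (a - 2*c)" by (simp add: power2_eq_square algebra_simps)
  also have "\<dots> < 0" using b by (intro mult_pos_neg) (auto simp: c_def)
  finally have "(2*t*b + t\<^sup>2*a) * c\<^sup>2 < 0" .
  moreover have "c\<^sup>2 > 0" using pos by simp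
  ultimately have "2*t*b + t\<^sup>2*a < 0" by (simp add: mult_less_0_iff)
  then show False using assms by (metis not_le)
qed

definition ONEV :: "complex^'n^'n \<Rightarrow> (complex^'n) set \<Rightarrow> (complex^'n \<Rightarrow> real) \<Rightarrow> bool" where
  "ONEV M S lam \<longleftrightarrow> (\<forall>s\<in>S. cinner s s = 1) \<and> (\<forall>s\<in>S. \<forall>t\<in>S. s \<noteq> t \<longrightarrow> cinner s t = 0)
     \<and> (\<forall>s\<in>S. M *v s = complex_of_real (lam s) *s s)"

lemma ON_bound:
  fixes S :: "(complex^'n) set"
  assumes "\<forall>s\<in>S. cinner s s = 1" "\<forall>s\<in>S. \<forall>t\<in>S. s \<noteq> t \<longrightarrow> cinner s t = 0"
  shows "finite S \<and> card S \<le> CARD('n)"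
proof -
  have ind: "\<not> vec.dependent S"
  proof
    assume "vec.dependent S"
    then obtain t u v where t: "finite t" "t \<subseteq> S" "(\<Sum>v\<in>t. u v *s v) = 0" and v: "v \<in> t" "u v \<noteq> 0"
      unfolding vec.dependent_explicit by blast
    have "0 = cinner v (\<Sum>w\<in>t. u w *s w)" using t by simp
    also have "\<dots> = (\<Sum>w\<in>t. u w * cinner v w)" by (simp add: cinner_sum_right cinner_scale_right)
    also have "\<dots> = u v * cinner v v"
    proof -
      have "(\<Sum>w\<in>t. u w * cinner v w) = u v * cinner v v + (\<Sum>w\<in>t - {v}. u w * cinner v w)"
        by (rule sum.remove[OF t(1) v(1)])
      moreover have "(\<Sum>w\<in>t - {v}. u w * cinner v w) = 0"
      proof (intro sum.neutral ballI)
        fix w assume w: "w \<in> t - {v}"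
        then have "w \<in> S" "v \<in> S" "v \<noteq> w" using t(2) v(1) by auto
        then show "u w * cinner v w = 0" using assms(2) by simp
      qed
      ultimately show ?thesis by simp
    qed
    also have "\<dots> = u v" using assms(1) t(2) v(1) by auto
    finally show False using v by simp
  qed
  from vec.independent_bound_general[OF ind] have "finite S" "card S \<le> vec.dim S" by auto
  moreover have "vec.dim S \<le> vec.dim (UNIV :: (complex^'n) set)" by (rule vec.dim_subset) simp
  ultimately show ?thesis by (simp add: card_cart_basis)
qed


lemma F_scale: "Re (cinner (complex_of_real r *s u) (M *v (complex_of_real r *s u))) = r\<^sup>2 * Re (cinner u (M *v u))"
  by (simp add: matvec_scale cinner_scale_left cinner_scale_right power2_eq_square)

lemma eig_exists:
  fixes M :: "complex^'n^'n" and S :: "(complex^'n) set"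
  assumes herm: "herm M" and inv: "\<forall>s\<in>S. \<exists>l::real. M *v s = complex_of_real l *s s"
    and w0: "w0 \<noteq> 0" "\<forall>s\<in>S. cinner s w0 = 0"
  shows "\<exists>v l. cinner v v = 1 \<and> (\<forall>s\<in>S. cinner s v = 0) \<and> M *v v = complex_of_real l *s v"
proof -
  define W where "W = {x. \<forall>s\<in>S. cinner s x = 0}"
  have "W = (\<Inter>s\<in>S. {x. cinner s x = 0})" by (auto simp: W_def)
  moreover have "closed {x. cinner s x = 0}" for s :: "complex^'n"
    by (rule closed_Collect_eq[OF cont_cinner(1) continuous_on_const])
  ultimately have Wclosed: "closed W" by auto
  have Winv: "M *v x \<in> W" if "x \<in> W" for x
  proof -
    have "cinner s (M *v x) = 0" if s: "s \<in> S" for s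
    proof -
      obtain l where l: "M *v s = complex_of_real l *s s" using inv s by blast
      have "cinner s (M *v x) = cinner (M *v s) x" by (rule herm_cinner[OF herm])
      also have "\<dots> = 0" using \<open>x \<in> W\<close> s by (simp add: l cinner_scale_left W_def)
      finally show ?thesis .
    qed
    then show ?thesis by (simp add: W_def)
  qed
  have Wscale: "c *s x \<in> W" if "x \<in> W" for x c using that by (simp add: W_def cinner_scale_right)
  have Wadd: "x + y \<in> W" if "x \<in> W" "y \<in> W" for x y using that by (simp add: W_def cinner_add_right)
  have Wdiff: "x - y \<in> W" if "x \<in> W" "y \<in> W" for x y using that by (simp add: W_def cinner_diff_right)
  define T where "T = sphere 0 1 \<inter> W"
  have Tc: "compact T" unfolding T_def using Wclosed by (intro compact_Int_closed) auto
  define x1 where "x1 = complex_of_real (1 / norm w0) *s w0"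
  have "x1 \<in> W" unfolding x1_def using w0 by (intro Wscale) (simp add: W_def)
  moreover have "norm x1 = 1" unfolding x1_def ofreal_scale using w0 by simp
  ultimately have "x1 \<in> T" by (simp add: T_def)
  then have Tne: "T \<noteq> {}" by auto
  define F where "F = (\<lambda>x::complex^'n. Re (cinner x (M *v x)))"
  have "continuous_on T F" unfolding F_def by (rule cont_cinner(2))
  then obtain v where vT: "v \<in> T" and vmax: "\<forall>y\<in>T. F y \<le> F v"
    using continuous_attains_sup[OF Tc Tne] by blast
  define lam where "lam = F v"
  have nv: "norm v = 1" "v \<in> W" using vT by (auto simp: T_def)
  have vv: "cinner v v = 1" using nv by (simp add: cinner_norm)
  have bound: "F u \<le> lam * (norm u)\<^sup>2" if u: "u \<in> W" for u
  proof (cases "u = 0")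
    case True then show ?thesis by (simp add: F_def)
  next
    case False
    define y where "y = complex_of_real (1 / norm u) *s u"
    have "y \<in> W" unfolding y_def using u by (intro Wscale)
    moreover have "norm y = 1" unfolding y_def ofreal_scale using False by simp
    ultimately have "y \<in> T" by (simp add: T_def)
    then have "F y \<le> lam" using vmax lam_def by auto
    moreover have "F y = (1 / norm u)\<^sup>2 * F u" unfolding y_def F_def by (rule F_scale)
    ultimately have "(1 / norm u)\<^sup>2 * F u \<le> lam" by simp
    then have "(norm u)\<^sup>2 * ((1 / norm u)\<^sup>2 * F u) \<le> (norm u)\<^sup>2 * lam"
      by (rule mult_left_mono) simp
    then show ?thesis using False by (simp add: power2_eq_square field_simps)
  qed
  define N where "N = (\<lambda>x. complex_of_real lam *s x - M *v x)"
  have N_add: "N (x + y) = N x + N y" for x y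
    by (simp add: N_def vector_add_ldistrib matrix_vector_right_distrib algebra_simps)
  have N_scale: "N (c *s x) = c *s N x" for x c
    by (simp add: N_def matvec_scale vector_smult_assoc vector_ssub_ldistrib mult.commute)
  have N_herm: "cinner x (N y) = cinner (N x) y" for x y
    by (simp add: N_def cinner_diff_left cinner_diff_right cinner_scale_left cinner_scale_right herm_cinner[OF herm])
  define Q where "Q = (\<lambda>x. Re (cinner x (N x)))"
  have Qnn: "Q u \<ge> 0" if "u \<in> W" for u
  proof -
    have "Q u = lam * (norm u)\<^sup>2 - F u"
      by (simp add: Q_def N_def F_def cinner_diff_right cinner_scale_right cinner_norm del: of_real_power)
    then show ?thesis using bound[OF that] by simp
  qed
  have Qv: "Q v = 0"
    by (simp add: Q_def N_def F_def cinner_diff_right cinner_scale_right vv lam_def)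
  have orth: "Re (cinner u (N v)) = 0" if u: "u \<in> W" for u
  proof -
    have "\<forall>t. 0 \<le> 2 * t * Re (cinner u (N v)) + t\<^sup>2 * Q u"
    proof
      fix t :: real
      let ?c = "complex_of_real t"
      have "v + ?c *s u \<in> W" using nv u by (intro Wadd Wscale)
      then have "0 \<le> Q (v + ?c *s u)" by (rule Qnn)
      also have "Q (v + ?c *s u) = Q v + t * Re (cinner v (N u)) + t * Re (cinner u (N v)) + t\<^sup>2 * Q u"
        by (simp add: Q_def N_add N_scale cinner_add_left cinner_add_right cinner_scale_left
            cinner_scale_right power2_eq_square algebra_simps)
      also have "Re (cinner v (N u)) = Re (cinner u (N v))"
      proof -
        have "cinner v (N u) = cinner (N v) u" by (rule N_herm)
        also have "\<dots> = cnj (cinner u (N v))" by (rule cinner_commute)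
        finally show ?thesis by simp
      qed
      finally show "0 \<le> 2 * t * Re (cinner u (N v)) + t\<^sup>2 * Q u" using Qv by simp
    qed
    then show ?thesis by (rule quad_lemma)
  qed
  have NvW: "N v \<in> W" unfolding N_def using nv by (intro Wdiff Wscale Winv)
  have "Re (cinner (N v) (N v)) = 0" by (rule orth[OF NvW])
  then have "cinner (N v) (N v) = 0" using cinner_self_Re(2)[of "N v"] by (simp add: complex_eq_iff)
  then have "N v = 0" by (simp add: cinner_self_eq_0)
  then have "M *v v = complex_of_real lam *s v" by (simp add: N_def)
  then show ?thesis using vv nv(2) by (auto simp: W_def)
qed


lemma ON_pick:
  assumes "\<forall>s\<in>S. cinner s s = 1" "\<forall>s\<in>S. \<forall>t\<in>S. s \<noteq> t \<longrightarrow> cinner s t = 0" "finite S" "t \<in> S"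
  shows "(\<Sum>s\<in>S. f s * cinner t s) = f t"
proof -
  have "(\<Sum>s\<in>S. f s * cinner t s) = f t * cinner t t + (\<Sum>s\<in>S - {t}. f s * cinner t s)"
    by (rule sum.remove[OF assms(3,4)])
  moreover have "(\<Sum>s\<in>S - {t}. f s * cinner t s) = 0"
  proof (intro sum.neutral ballI)
    fix s assume "s \<in> S - {t}"
    then show "f s * cinner t s = 0" using assms(2,4) by auto
  qed
  ultimately show ?thesis using assms(1,4) by simp
qed

lemma ON_expand_cinner:
  assumes "\<forall>s\<in>S. cinner s s = 1" "\<forall>s\<in>S. \<forall>t\<in>S. s \<noteq> t \<longrightarrow> cinner s t = 0" "finite S" "t \<in> S"
  shows "cinner t (\<Sum>s\<in>S. f s *s s) = f t"
  by (simp add: cinner_sum_right cinner_scale_right ON_pick[OF assms])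

theorem spectral:
  fixes M :: "complex^'n^'n"
  assumes herm: "herm M"
  shows "\<exists>S lam. finite S \<and> ONEV M S lam \<and> (\<forall>v. v = (\<Sum>s\<in>S. cinner s v *s s))"
proof -
  define P where "P = (\<lambda>S. \<exists>lam. ONEV M S lam)"
  have P0: "P {}" by (simp add: P_def ONEV_def)
  have Pb: "finite S \<and> card S \<le> CARD('n)" if "P S" for S
    using that ON_bound unfolding P_def ONEV_def by blast
  obtain S where PS: "P S" and Smax: "\<forall>y. P y \<longrightarrow> card y \<le> card S"
    using Lattices_Big.ex_has_greatest_nat[of P "{}" card "CARD('n) + 1"] P0 Pb
    by (metis le_imp_less_Suc Suc_eq_plus1)
  obtain lam where ON: "ONEV M S lam" using PS P_def by blast
  have fin: "finite S" using Pb[OF PS] by simp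
  have on1: "\<forall>s\<in>S. cinner s s = 1" and on2: "\<forall>s\<in>S. \<forall>t\<in>S. s \<noteq> t \<longrightarrow> cinner s t = 0"
    and ev: "\<forall>s\<in>S. M *v s = complex_of_real (lam s) *s s" using ON by (auto simp: ONEV_def)
  have compl: "w = 0" if w: "\<forall>s\<in>S. cinner s w = 0" for w
  proof (rule ccontr)
    assume "w \<noteq> 0"
    from eig_exists[OF herm _ this w] ev obtain v l where
      v: "cinner v v = 1" "\<forall>s\<in>S. cinner s v = 0" "M *v v = complex_of_real l *s v" by blast
    have vS: "v \<notin> S" using v(1,2) by auto
    have "ONEV M (insert v S) (lam(v := l))"
      unfolding ONEV_def
    proof (intro conjI ballI impI)
      fix s assume "s \<in> insert v S" then show "cinner s s = 1" using v on1 by auto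
    next
      fix s assume "s \<in> insert v S" then show "M *v s = complex_of_real ((lam(v := l)) s) *s s"
        using v ev vS by auto
    next
      fix s t assume st: "s \<in> insert v S" "t \<in> insert v S" "s \<noteq> t"
      show "cinner s t = 0"
      proof (cases "s = v")
        case True
        then have "t \<in> S" using st by auto
        then show ?thesis using True v(2) cinner_commute[of v t] by simp
      next
        case False
        then have "s \<in> S" using st by auto
        then show ?thesis using v(2) on2 st by auto
      qed
    qed
    then have "P (insert v S)" by (auto simp: P_def)
    then have "card (insert v S) \<le> card S" using Smax by blast
    then show False using vS fin by simp
  qed
  have "v = (\<Sum>s\<in>S. cinner s v *s s)" for v
  proof -
    have "\<forall>t\<in>S. cinner t (v - (\<Sum>s\<in>S. cinner s v *s s)) = 0"
      using ON_expand_cinner[OF on1 on2 fin] by (simp add: cinner_diff_right)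
    then have "v - (\<Sum>s\<in>S. cinner s v *s s) = 0" by (rule compl)
    then show ?thesis by simp
  qed
  then show ?thesis using fin ON by blast
qed


definition mfun :: "(real \<Rightarrow> real) \<Rightarrow> complex^'n^'n \<Rightarrow> complex^'n^'n" where
  "mfun f M = (THE X. \<forall>l v. M *v v = l *s v \<longrightarrow> X *v v = complex_of_real (f (Re l)) *s v)"

lemma mpow_mfun: "mpow M a = mfun (\<lambda>x. x powr a) M"
  by (simp add: mpow_def mfun_def)

lemma matvec_lincomb: "(Y::complex^'n^'m) *v (\<Sum>s\<in>S. c s *s s) = (\<Sum>s\<in>S. c s *s (Y *v s))"
  by (simp add: matvec_sum matvec_scale)

lemma mfun_basis:
  fixes M :: "complex^'n^'n"
  assumes herm: "herm M" and fin: "finite S" and ON: "ONEV M S lam"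
    and span: "\<forall>v. v = (\<Sum>s\<in>S. cinner s v *s s)"
  shows "mfun f M *v v = (\<Sum>s\<in>S. (complex_of_real (f (lam s)) * cinner s v) *s s)"
    and "\<forall>l w. M *v w = l *s w \<longrightarrow> mfun f M *v w = complex_of_real (f (Re l)) *s w"
proof -
  have on1: "\<forall>s\<in>S. cinner s s = 1" and on2: "\<forall>s\<in>S. \<forall>t\<in>S. s \<noteq> t \<longrightarrow> cinner s t = 0"
    and ev: "\<forall>s\<in>S. M *v s = complex_of_real (lam s) *s s" using ON by (auto simp: ONEV_def)
  define X :: "complex^'n^'n" where
    "X = (\<chi> i j. \<Sum>s\<in>S. complex_of_real (f (lam s)) * s$i * cnj (s$j))"
  have Xv: "X *v v = (\<Sum>s\<in>S. (complex_of_real (f (lam s)) * cinner s v) *s s)" for v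
  proof -
    have "(X *v v)$i = (\<Sum>s\<in>S. ((complex_of_real (f (lam s)) * cinner s v) *s s)$i)" for i
    proof -
      have "(X *v v)$i = (\<Sum>j\<in>UNIV. \<Sum>s\<in>S. complex_of_real (f (lam s)) * s$i * cnj (s$j) * v$j)"
        by (simp add: X_def matrix_vector_mult_def sum_distrib_right)
      also have "\<dots> = (\<Sum>s\<in>S. \<Sum>j\<in>UNIV. complex_of_real (f (lam s)) * s$i * cnj (s$j) * v$j)"
        by (rule sum.swap)
      also have "\<dots> = (\<Sum>s\<in>S. ((complex_of_real (f (lam s)) * cinner s v) *s s)$i)"
        by (simp add: cinner_def sum_distrib_left mult.commute mult.left_commute)
      finally show ?thesis .
    qed
    then show ?thesis by (simp add: vec_eq_iff sum_component)
  qed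
  have cond: "\<forall>l v. M *v v = l *s v \<longrightarrow> X *v v = complex_of_real (f (Re l)) *s v"
  proof (intro allI impI)
    fix l v assume Mv: "M *v v = l *s v"
    have "(complex_of_real (f (lam s)) * cinner s v) = complex_of_real (f (Re l)) * cinner s v" if s: "s \<in> S" for s
    proof (cases "cinner s v = 0")
      case False
      have "l * cinner s v = cinner s (M *v v)" by (simp add: Mv cinner_scale_right)
      also have "\<dots> = cinner (M *v s) v" by (rule herm_cinner[OF herm])
      also have "\<dots> = complex_of_real (lam s) * cinner s v" using ev s by (simp add: cinner_scale_left)
      finally have "l = complex_of_real (lam s)" using False by simp
      then show ?thesis by simp
    qed simp
    then have "X *v v = (\<Sum>s\<in>S. (complex_of_real (f (Re l)) * cinner s v) *s s)"
      unfolding Xv by (intro sum.cong) auto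
    also have "\<dots> = complex_of_real (f (Re l)) *s (\<Sum>s\<in>S. cinner s v *s s)"
      by (simp add: vec_eq_iff sum_component sum_distrib_left mult.assoc)
    also have "\<dots> = complex_of_real (f (Re l)) *s v" using span by metis
    finally show "X *v v = complex_of_real (f (Re l)) *s v" .
  qed
  have uniq: "Y = X" if Y: "\<forall>l v. M *v v = l *s v \<longrightarrow> Y *v v = complex_of_real (f (Re l)) *s v" for Y
  proof -
    have "Y *v v = X *v v" for v
    proof -
      have Ys: "Y *v s = complex_of_real (f (lam s)) *s s" if "s \<in> S" for s
        using Y ev that by (metis Re_complex_of_real)
      have "Y *v v = Y *v (\<Sum>s\<in>S. cinner s v *s s)" using span by metis
      also have "\<dots> = (\<Sum>s\<in>S. cinner s v *s (Y *v s))" by (rule matvec_lincomb)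
      also have "\<dots> = (\<Sum>s\<in>S. (complex_of_real (f (lam s)) * cinner s v) *s s)"
        by (intro sum.cong refl) (simp add: Ys vector_smult_assoc mult.commute)
      finally show ?thesis using Xv by simp
    qed
    then show ?thesis by (simp add: matrix_eq)
  qed
  have "mfun f M = X" unfolding mfun_def
    by (rule the_equality) (use cond uniq in blast)+
  then show "mfun f M *v v = (\<Sum>s\<in>S. (complex_of_real (f (lam s)) * cinner s v) *s s)"
    and "\<forall>l w. M *v w = l *s w \<longrightarrow> mfun f M *v w = complex_of_real (f (Re l)) *s w"
    using Xv cond by simp_all
qed


lemma herm_basis:
  fixes M :: "complex^'n^'n"
  assumes herm: "herm M"
  shows "\<exists>S lam. finite S \<and> (\<forall>s\<in>S. cinner s s = 1) \<and> (\<forall>s\<in>S. \<forall>t\<in>S. s \<noteq> t \<longrightarrow> cinner s t = 0)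
     \<and> (\<forall>s\<in>S. M *v s = complex_of_real (lam s) *s s) \<and> (\<forall>v. v = (\<Sum>s\<in>S. cinner s v *s s))
     \<and> (\<forall>f v. mfun f M *v v = (\<Sum>s\<in>S. (complex_of_real (f (lam s)) * cinner s v) *s s))"
proof -
  obtain S lam where S: "finite S" "ONEV M S lam" "\<forall>v. v = (\<Sum>s\<in>S. cinner s v *s s)"
    using spectral[OF herm] by blast
  show ?thesis
    using S mfun_basis(1)[OF herm S] unfolding ONEV_def by blast
qed

lemma mfun_eig:
  assumes "herm M" "M *v v = l *s v"
  shows "mfun f M *v v = complex_of_real (f (Re l)) *s v"
proof -
  obtain S lam where S: "finite S" "ONEV M S lam" "\<forall>v. v = (\<Sum>s\<in>S. cinner s v *s s)"
    using spectral[OF assms(1)] by blast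
  show ?thesis using mfun_basis(2)[OF assms(1) S] assms(2) by blast
qed

lemma mfun_mult:
  assumes herm: "herm M"
  shows "mfun f M *v (mfun g M *v v) = mfun (\<lambda>x. f x * g x) M *v v"
proof -
  obtain S lam where S: "finite S" "\<forall>s\<in>S. M *v s = complex_of_real (lam s) *s s"
     "\<forall>f v. mfun f M *v v = (\<Sum>s\<in>S. (complex_of_real (f (lam s)) * cinner s v) *s s)"
    using herm_basis[OF herm] by blast
  have fs: "mfun f M *v s = complex_of_real (f (lam s)) *s s" if "s \<in> S" for s
    using mfun_eig[OF herm] S(2) that by (metis Re_complex_of_real)
  have "mfun f M *v (mfun g M *v v) = (\<Sum>s\<in>S. (complex_of_real (g (lam s)) * cinner s v) *s (mfun f M *v s))"
    by (simp only: S(3)[rule_format, of g] matvec_lincomb)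
  also have "\<dots> = (\<Sum>s\<in>S. (complex_of_real (f (lam s) * g (lam s)) * cinner s v) *s s)"
    by (intro sum.cong refl) (simp add: fs vector_smult_assoc mult.commute mult.left_commute)
  also have "\<dots> = mfun (\<lambda>x. f x * g x) M *v v" using S(3) by simp
  finally show ?thesis .
qed

lemma mfun_add:
  assumes herm: "herm M"
  shows "mfun (\<lambda>x. f x + g x) M *v v = mfun f M *v v + mfun g M *v v"
proof -
  obtain S lam where S: "\<forall>f v. mfun f M *v v = (\<Sum>s\<in>S. (complex_of_real (f (lam s)) * cinner s v) *s s)"
    using herm_basis[OF herm] by blast
  show ?thesis unfolding S[rule_format] by (simp add: sum.distrib[symmetric] vector_sadd_rdistrib distrib_right)
qed

lemma mfun_const:
  assumes herm: "herm M"
  shows "mfun (\<lambda>x. c) M *v v = complex_of_real c *s v"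
proof -
  obtain S lam where S: "\<forall>v. v = (\<Sum>s\<in>S. cinner s v *s s)"
     "\<forall>f v. mfun f M *v v = (\<Sum>s\<in>S. (complex_of_real (f (lam s)) * cinner s v) *s s)"
    using herm_basis[OF herm] by blast
  have "mfun (\<lambda>x. c) M *v v = complex_of_real c *s (\<Sum>s\<in>S. cinner s v *s s)"
    unfolding S(2)[rule_format, of "\<lambda>x. c"] by (simp add: vec_eq_iff sum_component sum_distrib_left mult.assoc)
  then show ?thesis using S(1) by metis
qed

lemma mfun_id:
  assumes herm: "herm M"
  shows "mfun (\<lambda>x. x) M *v v = M *v v"
proof -
  obtain S lam where S: "\<forall>s\<in>S. M *v s = complex_of_real (lam s) *s s" "\<forall>v. v = (\<Sum>s\<in>S. cinner s v *s s)"
     "\<forall>f v. mfun f M *v v = (\<Sum>s\<in>S. (complex_of_real (f (lam s)) * cinner s v) *s s)"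
    using herm_basis[OF herm] by blast
  have "M *v v = M *v (\<Sum>s\<in>S. cinner s v *s s)" using S(2) by metis
  also have "\<dots> = (\<Sum>s\<in>S. cinner s v *s (M *v s))" by (rule matvec_lincomb)
  also have "\<dots> = mfun (\<lambda>x. x) M *v v"
    unfolding S(3)[rule_format] by (intro sum.cong refl) (simp add: S(1) vector_smult_assoc mult.commute)
  finally show ?thesis by simp
qed

lemma mfun_cinner:
  assumes herm: "herm M"
  shows "cinner x (mfun f M *v y) = cinner (mfun f M *v x) y"
proof -
  obtain S lam where S: "\<forall>f v. mfun f M *v v = (\<Sum>s\<in>S. (complex_of_real (f (lam s)) * cinner s v) *s s)"
    using herm_basis[OF herm] by blast
  have cc: "cnj (cinner s x) = cinner x s" for s by (simp add: cinner_commute[of x s])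
  show ?thesis unfolding S[rule_format]
    by (simp add: cinner_sum_left cinner_sum_right cinner_scale_left cinner_scale_right
        cc mult.commute mult.left_commute)
qed

lemma mfun_commute:
  assumes herm: "herm M" and DM: "D ** M = M ** D"
  shows "D *v (mfun f M *v v) = mfun f M *v (D *v v)"
proof -
  obtain S lam where S: "\<forall>s\<in>S. M *v s = complex_of_real (lam s) *s s" "\<forall>v. v = (\<Sum>s\<in>S. cinner s v *s s)"
     "\<forall>f v. mfun f M *v v = (\<Sum>s\<in>S. (complex_of_real (f (lam s)) * cinner s v) *s s)"
    using herm_basis[OF herm] by blast
  have Ds: "mfun f M *v (D *v s) = complex_of_real (f (lam s)) *s (D *v s)" if s: "s \<in> S" for s
  proof -
    have "M *v (D *v s) = D *v (M *v s)" by (simp add: matrix_vector_mul_assoc DM)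
    also have "\<dots> = complex_of_real (lam s) *s (D *v s)" using S(1) s by (simp add: matvec_scale)
    finally show ?thesis using mfun_eig[OF herm] by (metis Re_complex_of_real)
  qed
  have "D *v (mfun f M *v v) = (\<Sum>s\<in>S. (complex_of_real (f (lam s)) * cinner s v) *s (D *v s))"
    unfolding S(3)[rule_format] by (rule matvec_lincomb)
  also have "\<dots> = (\<Sum>s\<in>S. cinner s v *s (mfun f M *v (D *v s)))"
    by (intro sum.cong refl) (simp add: Ds vector_smult_assoc mult.commute)
  also have "\<dots> = mfun f M *v (D *v (\<Sum>s\<in>S. cinner s v *s s))"
    by (simp only: matvec_sum matvec_scale)
  also have "\<dots> = mfun f M *v (D *v v)" using S(2) by metis
  finally show ?thesis .
qed

lemma mfun_commute_mat:
  assumes herm: "herm M" and DM: "D ** M = M ** D"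
  shows "D ** mfun f M = mfun f M ** D"
  using mfun_commute[OF assms] by (simp add: matrix_eq matrix_vector_mul_assoc[symmetric])


lemma smult_sum: "(c::complex) *s (\<Sum>s\<in>S. f s) = (\<Sum>s\<in>S. c *s f s)"
  by (induct S rule: infinite_finite_induct) (auto simp: vector_add_ldistrib)

lemma mfun_cong_fun: "(\<And>x. f x = g x) \<Longrightarrow> mfun f M = mfun g M"
  by (metis ext)

lemma mfun_swap:
  assumes hM: "herm M" and hN: "herm N" and MN: "M ** N = N ** M" and eq: "M *v \<Psi> = N *v \<Psi>"
  shows "mfun f M *v \<Psi> = mfun f N *v \<Psi>"
proof -
  obtain S lam where S: "finite S" "\<forall>v. v = (\<Sum>s\<in>S. cinner s v *s s)"
     "\<forall>f v. mfun f M *v v = (\<Sum>s\<in>S. (complex_of_real (f (lam s)) * cinner s v) *s s)"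
    using herm_basis[OF hM] by blast
  define \<Lambda> where "\<Lambda> = lam ` S"
  have finL: "finite \<Lambda>" using S(1) by (simp add: \<Lambda>_def)
  define g where "g = (\<lambda>(\<mu>::real) (x::real). if x = \<mu> then 1 else (0::real))"
  define x where "x = (\<lambda>\<mu>. mfun (g \<mu>) M *v \<Psi>)"
  have sumx: "(\<Sum>\<mu>\<in>\<Lambda>. complex_of_real (h \<mu>) *s x \<mu>) = mfun h M *v \<Psi>" for h
  proof -
    have "(\<Sum>\<mu>\<in>\<Lambda>. complex_of_real (h \<mu>) *s x \<mu>)
        = (\<Sum>\<mu>\<in>\<Lambda>. \<Sum>s\<in>S. (complex_of_real (h \<mu> * g \<mu> (lam s)) * cinner s \<Psi>) *s s)"
      unfolding x_def S(3)[rule_format] by (simp add: vector_smult_assoc mult.assoc smult_sum)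
    also have "\<dots> = (\<Sum>s\<in>S. \<Sum>\<mu>\<in>\<Lambda>. (complex_of_real (h \<mu> * g \<mu> (lam s)) * cinner s \<Psi>) *s s)"
      by (rule sum.swap)
    also have "\<dots> = (\<Sum>s\<in>S. (complex_of_real (h (lam s)) * cinner s \<Psi>) *s s)"
    proof (intro sum.cong refl)
      fix s assume s: "s \<in> S"
      have "(\<Sum>\<mu>\<in>\<Lambda>. (complex_of_real (h \<mu> * g \<mu> (lam s)) * cinner s \<Psi>) *s s)
          = (\<Sum>\<mu>\<in>\<Lambda>. if lam s = \<mu> then (complex_of_real (h \<mu>) * cinner s \<Psi>) *s s else 0)"
        by (intro sum.cong refl) (auto simp: g_def)
      also have "\<dots> = (complex_of_real (h (lam s)) * cinner s \<Psi>) *s s"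
        using finL s by (simp add: \<Lambda>_def)
      finally show "(\<Sum>\<mu>\<in>\<Lambda>. (complex_of_real (h \<mu> * g \<mu> (lam s)) * cinner s \<Psi>) *s s) = (complex_of_real (h (lam s)) * cinner s \<Psi>) *s s" .
    qed
    also have "\<dots> = mfun h M *v \<Psi>" using S(3) by simp
    finally show ?thesis .
  qed
  have Nx: "N *v x \<mu> = complex_of_real \<mu> *s x \<mu>" for \<mu>
  proof -
    have "N *v x \<mu> = mfun (g \<mu>) M *v (N *v \<Psi>)"
      unfolding x_def by (rule mfun_commute[OF hM]) (simp add: MN)
    also have "\<dots> = mfun (g \<mu>) M *v (M *v \<Psi>)" by (simp add: eq)
    also have "\<dots> = M *v x \<mu>" unfolding x_def by (rule mfun_commute[OF hM, symmetric]) simp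
    also have "\<dots> = mfun (\<lambda>x. x) M *v x \<mu>" by (simp add: mfun_id[OF hM])
    also have "\<dots> = mfun (\<lambda>x. x * g \<mu> x) M *v \<Psi>" unfolding x_def by (rule mfun_mult[OF hM])
    also have "\<dots> = mfun (\<lambda>x. \<mu> * g \<mu> x) M *v \<Psi>"
      by (rule arg_cong[where f="\<lambda>X. X *v \<Psi>"], rule mfun_cong_fun) (simp add: g_def)
    also have "\<dots> = mfun (\<lambda>x. \<mu>) M *v x \<mu>" unfolding x_def by (rule mfun_mult[OF hM, symmetric])
    also have "\<dots> = complex_of_real \<mu> *s x \<mu>" by (rule mfun_const[OF hM])
    finally show ?thesis .
  qed
  have "mfun f N *v \<Psi> = mfun f N *v (\<Sum>\<mu>\<in>\<Lambda>. complex_of_real 1 *s x \<mu>)"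
    using sumx[of "\<lambda>_. 1"] mfun_const[OF hM, of 1 \<Psi>] by simp
  also have "\<dots> = (\<Sum>\<mu>\<in>\<Lambda>. complex_of_real (f \<mu>) *s x \<mu>)"
    by (simp add: matvec_sum mfun_eig[OF hN Nx])
  also have "\<dots> = mfun f M *v \<Psi>" by (rule sumx)
  finally show ?thesis by simp
qed

lemma supp_lemma:
  assumes hK: "herm K" and supp: "\<forall>v. K *v v = 0 \<longrightarrow> cinner v \<Psi> = 0"
  shows "mfun (\<lambda>x. if x = 0 then 0 else 1) K *v \<Psi> = \<Psi>"
proof -
  define Z where "Z = mfun (\<lambda>x. if x = 0 then 1 else 0) K"
  have sum1: "Z *v \<Psi> + mfun (\<lambda>x. if x = 0 then 0 else 1) K *v \<Psi> = \<Psi>"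
  proof -
    have "Z *v \<Psi> + mfun (\<lambda>x. if x = 0 then 0 else 1) K *v \<Psi>
        = mfun (\<lambda>x. (if x = 0 then 1 else 0) + (if x = 0 then 0 else 1)) K *v \<Psi>"
      unfolding Z_def by (rule mfun_add[OF hK, symmetric])
    also have "\<dots> = mfun (\<lambda>x. 1) K *v \<Psi>" by (rule arg_cong[where f="\<lambda>X. X *v \<Psi>"], rule mfun_cong_fun) simp
    also have "\<dots> = \<Psi>" by (simp add: mfun_const[OF hK])
    finally show ?thesis .
  qed
  have "K *v (Z *v \<Psi>) = mfun (\<lambda>x. x) K *v (Z *v \<Psi>)" by (simp add: mfun_id[OF hK])
  also have "\<dots> = mfun (\<lambda>x. x * (if x = 0 then 1 else 0)) K *v \<Psi>" unfolding Z_def by (rule mfun_mult[OF hK])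
  also have "\<dots> = mfun (\<lambda>x. 0) K *v \<Psi>" by (rule arg_cong[where f="\<lambda>X. X *v \<Psi>"], rule mfun_cong_fun) simp
  also have "\<dots> = 0" by (simp add: mfun_const[OF hK])
  finally have "cinner (Z *v \<Psi>) \<Psi> = 0" using supp by blast
  moreover have "cinner (Z *v \<Psi>) (Z *v \<Psi>) = cinner \<Psi> (Z *v (Z *v \<Psi>))"
    unfolding Z_def by (rule mfun_cinner[OF hK, symmetric])
  moreover have "Z *v (Z *v \<Psi>) = Z *v \<Psi>"
  proof -
    have "Z *v (Z *v \<Psi>) = mfun (\<lambda>x. (if x = 0 then 1 else 0) * (if x = 0 then 1 else 0)) K *v \<Psi>"
      unfolding Z_def by (rule mfun_mult[OF hK])
    also have "\<dots> = Z *v \<Psi>" unfolding Z_def by (rule arg_cong[where f="\<lambda>X. X *v \<Psi>"], rule mfun_cong_fun) simp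
    finally show ?thesis .
  qed
  ultimately have "cinner (Z *v \<Psi>) (Z *v \<Psi>) = 0" by (metis cinner_commute complex_cnj_zero)
  then have "Z *v \<Psi> = 0" by (simp add: cinner_self_eq_0)
  then show ?thesis using sum1 by simp
qed


lemma mfun_apply_cong: "(\<And>x. f x = g x) \<Longrightarrow> mfun f M *v v = mfun g M *v v"
  using mfun_cong_fun[of f g M] by metis

lemma core_pos:
  assumes hK: "herm K" and hL: "herm L" and KL: "K ** L = L ** K"
    and sK: "\<forall>v. K *v v = 0 \<longrightarrow> cinner v \<Psi> = 0" and sL: "\<forall>v. L *v v = 0 \<longrightarrow> cinner v \<Psi> = 0"
    and nz: "\<Psi> \<noteq> 0"
  shows "\<exists>r>0. cinner \<Psi> (mfun (\<lambda>x. x powr a) K *v (mfun (\<lambda>x. x powr b) L *v \<Psi>)) = complex_of_real r"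
proof -
  define K1 where "K1 = mfun (\<lambda>x. x powr (a/2)) K"
  define L1 where "L1 = mfun (\<lambda>x. x powr (b/2)) L"
  have hK1: "mfun (\<lambda>x. x powr a) K *v y = K1 *v (K1 *v y)" for y
  proof -
    have "K1 *v (K1 *v y) = mfun (\<lambda>x. x powr (a/2) * x powr (a/2)) K *v y"
      unfolding K1_def by (rule mfun_mult[OF hK])
    also have "\<dots> = mfun (\<lambda>x. x powr a) K *v y"
      by (rule mfun_apply_cong) (simp add: powr_add[symmetric])
    finally show ?thesis by simp
  qed
  have hL1: "mfun (\<lambda>x. x powr b) L *v y = L1 *v (L1 *v y)" for y
  proof -
    have "L1 *v (L1 *v y) = mfun (\<lambda>x. x powr (b/2) * x powr (b/2)) L *v y"
      unfolding L1_def by (rule mfun_mult[OF hL])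
    also have "\<dots> = mfun (\<lambda>x. x powr b) L *v y"
      by (rule mfun_apply_cong) (simp add: powr_add[symmetric])
    finally show ?thesis by simp
  qed
  have KL1: "K ** L1 = L1 ** K" unfolding L1_def by (rule mfun_commute_mat[OF hL]) (simp add: KL)
  have L1K1: "L1 *v (K1 *v v) = K1 *v (L1 *v v)" for v
    unfolding K1_def by (rule mfun_commute[OF hK]) (simp add: KL1)
  define w where "w = K1 *v (L1 *v \<Psi>)"
  have E: "cinner \<Psi> (mfun (\<lambda>x. x powr a) K *v (mfun (\<lambda>x. x powr b) L *v \<Psi>)) = cinner w w"
  proof -
    have "cinner \<Psi> (mfun (\<lambda>x. x powr a) K *v (mfun (\<lambda>x. x powr b) L *v \<Psi>))
        = cinner \<Psi> (K1 *v (K1 *v (L1 *v (L1 *v \<Psi>))))" by (simp add: hK1 hL1)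
    also have "\<dots> = cinner (K1 *v \<Psi>) (K1 *v (L1 *v (L1 *v \<Psi>)))"
      unfolding K1_def by (rule mfun_cinner[OF hK])
    also have "\<dots> = cinner (K1 *v \<Psi>) (L1 *v (K1 *v (L1 *v \<Psi>)))" by (simp add: L1K1)
    also have "\<dots> = cinner (L1 *v (K1 *v \<Psi>)) (K1 *v (L1 *v \<Psi>))"
      unfolding L1_def by (rule mfun_cinner[OF hL])
    also have "\<dots> = cinner w w" by (simp add: L1K1 w_def)
    finally show ?thesis .
  qed
  have wnz: "w \<noteq> 0"
  proof
    assume w0: "w = 0"
    define PK where "PK = mfun (\<lambda>x. if x = 0 then 0 else 1) K"
    define PL where "PL = mfun (\<lambda>x. if x = 0 then 0 else 1) L"
    have PKs: "PK *v \<Psi> = \<Psi>" unfolding PK_def by (rule supp_lemma[OF hK sK])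
    have PLs: "PL *v \<Psi> = \<Psi>" unfolding PL_def by (rule supp_lemma[OF hL sL])
    have PK1: "PK *v y = mfun (\<lambda>x. if x = 0 then 0 else x powr (-(a/2))) K *v (K1 *v y)" for y
    proof -
      have "mfun (\<lambda>x. if x = 0 then 0 else x powr (-(a/2))) K *v (K1 *v y)
          = mfun (\<lambda>x. (if x = 0 then 0 else x powr (-(a/2))) * x powr (a/2)) K *v y"
        unfolding K1_def by (rule mfun_mult[OF hK])
      also have "\<dots> = PK *v y" unfolding PK_def
        by (rule mfun_apply_cong) (simp add: powr_add[symmetric])
      finally show ?thesis by simp
    qed
    have PL1: "PL *v y = mfun (\<lambda>x. if x = 0 then 0 else x powr (-(b/2))) L *v (L1 *v y)" for y
    proof -
      have "mfun (\<lambda>x. if x = 0 then 0 else x powr (-(b/2))) L *v (L1 *v y)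
          = mfun (\<lambda>x. (if x = 0 then 0 else x powr (-(b/2))) * x powr (b/2)) L *v y"
        unfolding L1_def by (rule mfun_mult[OF hL])
      also have "\<dots> = PL *v y" unfolding PL_def
        by (rule mfun_apply_cong) (simp add: powr_add[symmetric])
      finally show ?thesis by simp
    qed
    have "PK *v (L1 *v \<Psi>) = mfun (\<lambda>x. if x = 0 then 0 else x powr (-(a/2))) K *v w"
      unfolding w_def by (rule PK1)
    then have "PK *v (L1 *v \<Psi>) = 0" using w0 by (simp only: matrix_vector_mult_0_right)
    moreover have "PK *v (L1 *v \<Psi>) = L1 *v (PK *v \<Psi>)"
      unfolding PK_def by (rule mfun_commute[OF hK, symmetric]) (simp add: KL1)
    ultimately have "L1 *v \<Psi> = 0" using PKs by simp
    then have "PL *v \<Psi> = 0" by (simp only: PL1 matrix_vector_mult_0_right)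
    then show False using PLs nz by simp
  qed
  have "cinner w w = complex_of_real ((norm w)\<^sup>2)" by (rule cinner_norm)
  moreover have "(norm w)\<^sup>2 > 0" using wnz by simp
  ultimately show ?thesis using E by (intro exI[of _ "(norm w)\<^sup>2"]) simp
qed



lemma sum_UNIV_pair: "(\<Sum>p\<in>(UNIV::('a::finite \<times> 'b::finite) set). F p) = (\<Sum>a\<in>UNIV. \<Sum>b\<in>UNIV. F (a, b))"
  by (simp add: sum.cartesian_product UNIV_Times_UNIV[symmetric] del: UNIV_Times_UNIV)

lemma sum_reindex2:
  fixes f :: "'i::finite \<Rightarrow> 'p::finite" and g :: "'i \<Rightarrow> 'q::finite"
  assumes fh: "\<And>p q. f (h p q) = p" and gh: "\<And>p q. g (h p q) = q" and hfg: "\<And>i. h (f i) (g i) = i"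
  shows "(\<Sum>i\<in>UNIV. F i) = (\<Sum>p\<in>UNIV. \<Sum>q\<in>UNIV. F (h p q))"
proof -
  let ?k = "\<lambda>(p, q). h p q"
  have inj: "inj ?k" by (rule injI) (metis (no_types, lifting) case_prod_beta fh gh prod.expand)
  have surj: "UNIV = range ?k" by (metis (no_types, lifting) UNIV_I case_prod_conv hfg image_eqI subsetI subset_antisym)
  have "(\<Sum>i\<in>UNIV. F i) = (\<Sum>i\<in>range ?k. F i)" using surj by simp
  also have "\<dots> = (\<Sum>pq\<in>UNIV. F (?k pq))" by (simp add: sum.reindex[OF inj])
  also have "\<dots> = (\<Sum>p\<in>UNIV. \<Sum>q\<in>UNIV. F (h p q))" by (simp add: sum_UNIV_pair)
  finally show ?thesis .
qed

lemma sum_if_mult: "(\<Sum>x\<in>UNIV. (if a = x then (A::complex) else 0) * B x) = A * B (a::'a::finite)"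
proof -
  have "\<And>x. (if a = x then A else 0) * B x = (if a = x then A * B x else 0)" by simp
  then show ?thesis by simp
qed

lemma sum_if_mult': "(\<Sum>x\<in>UNIV. B x * (if (a::'a::finite) = x then (A::complex) else 0)) = B a * A"
proof -
  have "\<And>x. B x * (if a = x then A else 0) = (if a = x then B x * A else 0)" by simp
  then show ?thesis by simp
qed

lemma sum_if_mult2: "(\<Sum>x\<in>UNIV. (if x = a then (A::complex) else 0) * B x) = A * B (a::'a::finite)"
  using sum_if_mult[of a A B] by (simp add: eq_commute)

lemma sum_if_mult2': "(\<Sum>x\<in>UNIV. B x * (if x = (a::'a::finite) then (A::complex) else 0)) = B a * A"
  using sum_if_mult'[of B a A] by (simp add: eq_commute)

lemmas sum_if_mults = sum_if_mult sum_if_mult' sum_if_mult2 sum_if_mult2'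

definition red :: "('i \<Rightarrow> 'p) \<Rightarrow> ('i \<Rightarrow> 'q::finite) \<Rightarrow> ('p \<Rightarrow> 'q \<Rightarrow> 'i) \<Rightarrow> complex^'i \<Rightarrow> complex^'i^'i" where
  "red f g h \<Psi> = (\<chi> i j. if g i = g j then (\<Sum>q\<in>UNIV. \<Psi>$(h (f i) q) * cnj (\<Psi>$(h (f j) q))) else 0)"

lemma red_herm: "herm (red f g h \<Psi>)"
  unfolding herm_def red_def by (simp add: cnj_sum mult.commute)

lemma red_apply:
  fixes f :: "'i::finite \<Rightarrow> 'p::finite" and g :: "'i \<Rightarrow> 'q::finite"
  assumes fh: "\<And>p q. f (h p q) = p" and gh: "\<And>p q. g (h p q) = q" and hfg: "\<And>i. h (f i) (g i) = i"
  shows "(red f g h \<Psi> *v v)$i = (\<Sum>p\<in>UNIV. \<Sum>q\<in>UNIV. \<Psi>$(h (f i) q) * cnj (\<Psi>$(h p q)) * v$(h p (g i)))"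
proof -
  have "(red f g h \<Psi> *v v)$i = (\<Sum>j\<in>UNIV. (if g i = g j then (\<Sum>q\<in>UNIV. \<Psi>$(h (f i) q) * cnj (\<Psi>$(h (f j) q))) else 0) * v$j)"
    by (simp add: red_def matrix_vector_mult_def)
  also have "\<dots> = (\<Sum>p\<in>UNIV. \<Sum>q'\<in>UNIV. (if g i = q' then (\<Sum>q\<in>UNIV. \<Psi>$(h (f i) q) * cnj (\<Psi>$(h p q))) else 0) * v$(h p q'))"
    by (subst sum_reindex2[OF fh gh hfg]) (simp add: fh gh cong: if_cong)
  also have "\<dots> = (\<Sum>p\<in>UNIV. (\<Sum>q\<in>UNIV. \<Psi>$(h (f i) q) * cnj (\<Psi>$(h p q))) * v$(h p (g i)))"
    by (simp only: sum_if_mult)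
  also have "\<dots> = (\<Sum>p\<in>UNIV. \<Sum>q\<in>UNIV. \<Psi>$(h (f i) q) * cnj (\<Psi>$(h p q)) * v$(h p (g i)))"
    by (simp add: sum_distrib_right)
  finally show ?thesis .
qed


lemma red_swap_eq:
  fixes f :: "'i::finite \<Rightarrow> 'p::finite" and g :: "'i \<Rightarrow> 'q::finite"
  assumes fh: "\<And>p q. f (h p q) = p" and gh: "\<And>p q. g (h p q) = q" and hfg: "\<And>i. h (f i) (g i) = i"
  shows "red f g h \<Psi> *v \<Psi> = red g f (\<lambda>q p. h p q) \<Psi> *v \<Psi>"
proof -
  have "(red f g h \<Psi> *v \<Psi>)$i = (red g f (\<lambda>q p. h p q) \<Psi> *v \<Psi>)$i" for i
  proof -
    have "(red g f (\<lambda>q p. h p q) \<Psi> *v \<Psi>)$i = (\<Sum>q\<in>UNIV. \<Sum>p\<in>UNIV. \<Psi>$(h p (g i)) * cnj (\<Psi>$(h p q)) * \<Psi>$(h (f i) q))"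
      by (rule red_apply[where h="\<lambda>q p. h p q"]) (auto simp: fh gh hfg)
    also have "\<dots> = (\<Sum>p\<in>UNIV. \<Sum>q\<in>UNIV. \<Psi>$(h p (g i)) * cnj (\<Psi>$(h p q)) * \<Psi>$(h (f i) q))"
      by (rule sum.swap)
    also have "\<dots> = (red f g h \<Psi> *v \<Psi>)$i"
      by (simp add: red_apply[OF fh gh hfg] mult_ac)
    finally show ?thesis by simp
  qed
  then show ?thesis by (simp add: vec_eq_iff)
qed

lemma red_comm:
  fixes f :: "'i::finite \<Rightarrow> 'p::finite" and g :: "'i \<Rightarrow> 'q::finite"
  assumes fh: "\<And>p q. f (h p q) = p" and gh: "\<And>p q. g (h p q) = q" and hfg: "\<And>i. h (f i) (g i) = i"
  shows "red f g h \<Psi> ** red g f (\<lambda>q p. h p q) \<Psi> = red g f (\<lambda>q p. h p q) \<Psi> ** red f g h \<Psi>"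
proof -
  define R where "R = (\<lambda>p1 p2. \<Sum>q\<in>UNIV. \<Psi>$(h p1 q) * cnj (\<Psi>$(h p2 q)))"
  define S where "S = (\<lambda>q1 q2. \<Sum>p\<in>UNIV. \<Psi>$(h p q1) * cnj (\<Psi>$(h p q2)))"
  have K: "red f g h \<Psi> $ i $ (h p q) = (if g i = q then R (f i) p else 0)"
    and K': "red f g h \<Psi> $ (h p q) $ j = (if q = g j then R p (f j) else 0)" for i j p q
    by (simp_all add: red_def R_def fh gh)
  have L: "red g f (\<lambda>q p. h p q) \<Psi> $ i $ (h p q) = (if f i = p then S (g i) q else 0)"
    and L': "red g f (\<lambda>q p. h p q) \<Psi> $ (h p q) $ j = (if p = f j then S q (g j) else 0)" for i j p q
    by (simp_all add: red_def S_def fh gh)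
  have E1: "(red f g h \<Psi> ** red g f (\<lambda>q p. h p q) \<Psi>)$i$j = R (f i) (f j) * S (g i) (g j)" for i j
  proof -
    have "(red f g h \<Psi> ** red g f (\<lambda>q p. h p q) \<Psi>)$i$j
      = (\<Sum>p\<in>UNIV. \<Sum>q\<in>UNIV. red f g h \<Psi> $ i $ (h p q) * red g f (\<lambda>q p. h p q) \<Psi> $ (h p q) $ j)"
      unfolding matrix_matrix_mult_def by (simp add: sum_reindex2[OF fh gh hfg])
    also have "\<dots> = R (f i) (f j) * S (g i) (g j)"
      by (simp only: K L') (simp add: sum_if_mults)
    finally show ?thesis .
  qed
  have E2: "(red g f (\<lambda>q p. h p q) \<Psi> ** red f g h \<Psi>)$i$j = R (f i) (f j) * S (g i) (g j)" for i j
  proof -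
    have "(red g f (\<lambda>q p. h p q) \<Psi> ** red f g h \<Psi>)$i$j
      = (\<Sum>p\<in>UNIV. \<Sum>q\<in>UNIV. red g f (\<lambda>q p. h p q) \<Psi> $ i $ (h p q) * red f g h \<Psi> $ (h p q) $ j)"
      unfolding matrix_matrix_mult_def by (simp add: sum_reindex2[OF fh gh hfg])
    also have "\<dots> = R (f i) (f j) * S (g i) (g j)"
      by (simp only: L K') (simp add: sum_if_mults mult.commute)
    finally show ?thesis .
  qed
  show ?thesis using E1 E2 by (simp add: vec_eq_iff)
qed


lemma red_supp:
  fixes f :: "'i::finite \<Rightarrow> 'p::finite" and g :: "'i \<Rightarrow> 'q::finite"
  assumes fh: "\<And>p q. f (h p q) = p" and gh: "\<And>p q. g (h p q) = q" and hfg: "\<And>i. h (f i) (g i) = i"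
    and z: "red f g h \<Psi> *v v = 0"
  shows "cinner v \<Psi> = 0"
proof -
  define c where "c = (\<lambda>q0 q. \<Sum>p\<in>UNIV. cnj (\<Psi>$(h p q)) * v$(h p q0))"
  have row: "(\<Sum>q\<in>UNIV. \<Psi>$(h p1 q) * c q0 q) = 0" for p1 q0
  proof -
    have "0 = (red f g h \<Psi> *v v)$(h p1 q0)" using z by simp
    also have "\<dots> = (\<Sum>p\<in>UNIV. \<Sum>q\<in>UNIV. \<Psi>$(h p1 q) * cnj (\<Psi>$(h p q)) * v$(h p q0))"
      by (simp add: red_apply[OF fh gh hfg] fh gh)
    also have "\<dots> = (\<Sum>q\<in>UNIV. \<Sum>p\<in>UNIV. \<Psi>$(h p1 q) * cnj (\<Psi>$(h p q)) * v$(h p q0))"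
      by (rule sum.swap)
    also have "\<dots> = (\<Sum>q\<in>UNIV. \<Psi>$(h p1 q) * c q0 q)"
      by (simp add: c_def sum_distrib_left mult.assoc)
    finally show ?thesis by simp
  qed
  have c0: "c q0 q = 0" for q0 q
  proof -
    define cv :: "complex^'q" where "cv = (\<chi> q. c q0 q)"
    have "cinner cv cv = (\<Sum>q\<in>UNIV. (\<Sum>p\<in>UNIV. \<Psi>$(h p q) * cnj (v$(h p q0))) * c q0 q)"
      by (simp add: cinner_def cv_def c_def cnj_sum)
    also have "\<dots> = (\<Sum>q\<in>UNIV. \<Sum>p\<in>UNIV. cnj (v$(h p q0)) * (\<Psi>$(h p q) * c q0 q))"
      by (simp add: sum_distrib_right sum_distrib_left mult_ac)
    also have "\<dots> = (\<Sum>p\<in>UNIV. cnj (v$(h p q0)) * (\<Sum>q\<in>UNIV. \<Psi>$(h p q) * c q0 q))"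
      by (subst sum.swap) (simp add: sum_distrib_left)
    also have "\<dots> = 0" by (simp add: row)
    finally have "cv = 0" by (simp add: cinner_self_eq_0)
    then show ?thesis by (simp add: cv_def vec_eq_iff)
  qed
  have "cinner v \<Psi> = (\<Sum>p\<in>UNIV. \<Sum>q\<in>UNIV. cnj (v$(h p q)) * \<Psi>$(h p q))"
    unfolding cinner_def by (rule sum_reindex2[OF fh gh hfg])
  also have "\<dots> = (\<Sum>q\<in>UNIV. cnj (c q q))"
    by (subst sum.swap) (simp add: c_def cnj_sum mult.commute)
  also have "\<dots> = 0" by (simp add: c0)
  finally show ?thesis .
qed


lemma H1: "(\<Sum>w\<in>UNIV. (if P \<and> a = w then \<alpha> else 0) * (if Q \<and> w = b then \<beta> else 0))
   = (if P \<and> Q \<and> a = (b::'a::finite) then \<alpha> * \<beta> else (0::complex))"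
  by (cases P; cases Q) (simp_all add: sum_if_mults)

lemma H2: "(\<Sum>z\<in>UNIV. (if (a::'a::finite) = z \<and> Q then \<gamma> z else (0::complex))) = (if Q then \<gamma> a else 0)"
  by (cases Q) simp_all

lemma H2': "(\<Sum>z\<in>UNIV. (if P \<and> z = (a::'a::finite) \<and> Q then \<gamma> z else (0::complex))) = (if P \<and> Q then \<gamma> a else 0)"
  by (cases P; cases Q) simp_all

lemma H3: "(\<Sum>z\<in>UNIV. (if z = (a::'a::finite) \<and> Q then \<gamma> z else (0::complex))) = (if Q then \<gamma> a else 0)"
  by (cases Q) simp_all

lemma H4: "(\<Sum>z\<in>UNIV. (if Q then \<gamma> z else (0::complex))) = (if Q then (\<Sum>z\<in>UNIV. \<gamma> z) else 0)"
  by (cases Q) simp_all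

lemma sum_reindex4:
  fixes h :: "'x::finite \<Rightarrow> 'y::finite \<Rightarrow> 'z::finite \<Rightarrow> 'w::finite \<Rightarrow> 'i::finite"
  assumes px: "\<And>x y z w. px (h x y z w) = x" and py: "\<And>x y z w. py (h x y z w) = y"
    and pz: "\<And>x y z w. pz (h x y z w) = z" and pw: "\<And>x y z w. pw (h x y z w) = w"
    and hp: "\<And>i. h (px i) (py i) (pz i) (pw i) = i"
  shows "(\<Sum>i\<in>UNIV. F i) = (\<Sum>x\<in>UNIV. \<Sum>y\<in>UNIV. \<Sum>z\<in>UNIV. \<Sum>w\<in>UNIV. F (h x y z w))"
proof -
  have "(\<Sum>i\<in>UNIV. F i) = (\<Sum>x\<in>UNIV. \<Sum>q\<in>UNIV. F ((\<lambda>x (y, z, w). h x y z w) x q))"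
    by (rule sum_reindex2[where f=px and g="\<lambda>i. (py i, pz i, pw i)"]) (auto simp: px py pz pw hp)
  also have "\<dots> = (\<Sum>x\<in>UNIV. \<Sum>y\<in>UNIV. \<Sum>z\<in>UNIV. \<Sum>w\<in>UNIV. F (h x y z w))"
    by (simp add: sum_UNIV_pair)
  finally show ?thesis .
qed

lemma commute4:
  fixes h :: "'x::finite \<Rightarrow> 'y::finite \<Rightarrow> 'z::finite \<Rightarrow> 'w::finite \<Rightarrow> 'i::finite"
    and K L :: "complex^'i^'i"
  assumes px: "\<And>x y z w. px (h x y z w) = x" and py: "\<And>x y z w. py (h x y z w) = y"
    and pz: "\<And>x y z w. pz (h x y z w) = z" and pw: "\<And>x y z w. pw (h x y z w) = w"
    and hp: "\<And>i. h (px i) (py i) (pz i) (pw i) = i"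
    and K: "\<And>i j. K$i$j = (if pz i = pz j \<and> pw i = pw j then \<phi> (px i) * cnj (\<phi> (px j)) * Ra (py i) (py j) else 0)"
    and L: "\<And>i j. L$i$j = (if py i = py j \<and> pw i = pw j then \<phi> (px i) * cnj (\<phi> (px j)) * Rb (pz i) (pz j) else 0)"
    and n: "(\<Sum>x\<in>UNIV. cnj (\<phi> x) * \<phi> x) = 1"
  shows "K ** L = L ** K"
proof -
  note RI = sum_reindex4[OF px py pz pw hp]
  have E1: "(K ** L)$i$j = (if pw i = pw j then \<phi> (px i) * cnj (\<phi> (px j)) * Ra (py i) (py j) * Rb (pz i) (pz j) else 0)" for i j
  proof -
    have "(K ** L)$i$j = (\<Sum>x\<in>UNIV. \<Sum>y\<in>UNIV. \<Sum>z\<in>UNIV. \<Sum>w\<in>UNIV. K$i$(h x y z w) * L$(h x y z w)$j)"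
      unfolding matrix_matrix_mult_def by (simp add: RI)
    also have "\<dots> = (\<Sum>x\<in>UNIV. \<Sum>y\<in>UNIV. \<Sum>z\<in>UNIV. \<Sum>w\<in>UNIV.
       (if pz i = z \<and> pw i = w then \<phi> (px i) * cnj (\<phi> x) * Ra (py i) y else 0) *
       (if y = py j \<and> w = pw j then \<phi> x * cnj (\<phi> (px j)) * Rb z (pz j) else 0))"
      by (simp only: K L px py pz pw)
    also have "\<dots> = (\<Sum>x\<in>UNIV. if pw i = pw j then \<phi> (px i) * cnj (\<phi> x) * Ra (py i) (py j) * (\<phi> x * cnj (\<phi> (px j)) * Rb (pz i) (pz j)) else 0)"
      by (simp only: H1 H2 H3)
    also have "\<dots> = (if pw i = pw j then \<phi> (px i) * cnj (\<phi> (px j)) * Ra (py i) (py j) * Rb (pz i) (pz j) * (\<Sum>x\<in>UNIV. cnj (\<phi> x) * \<phi> x) else 0)"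
      by (simp only: H4) (simp add: sum_distrib_left mult_ac)
    finally show ?thesis using n by simp
  qed
  have E2: "(L ** K)$i$j = (if pw i = pw j then \<phi> (px i) * cnj (\<phi> (px j)) * Ra (py i) (py j) * Rb (pz i) (pz j) else 0)" for i j
  proof -
    have "(L ** K)$i$j = (\<Sum>x\<in>UNIV. \<Sum>y\<in>UNIV. \<Sum>z\<in>UNIV. \<Sum>w\<in>UNIV. L$i$(h x y z w) * K$(h x y z w)$j)"
      unfolding matrix_matrix_mult_def by (simp add: RI)
    also have "\<dots> = (\<Sum>x\<in>UNIV. \<Sum>y\<in>UNIV. \<Sum>z\<in>UNIV. \<Sum>w\<in>UNIV.
       (if py i = y \<and> pw i = w then \<phi> (px i) * cnj (\<phi> x) * Rb (pz i) z else 0) *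
       (if z = pz j \<and> w = pw j then \<phi> x * cnj (\<phi> (px j)) * Ra y (py j) else 0))"
      by (simp only: K L px py pz pw)
    also have "\<dots> = (\<Sum>x\<in>UNIV. if pw i = pw j then \<phi> (px i) * cnj (\<phi> x) * Rb (pz i) (pz j) * (\<phi> x * cnj (\<phi> (px j)) * Ra (py i) (py j)) else 0)"
      by (simp only: H1 H2' H2)
    also have "\<dots> = (if pw i = pw j then \<phi> (px i) * cnj (\<phi> (px j)) * Ra (py i) (py j) * Rb (pz i) (pz j) * (\<Sum>x\<in>UNIV. cnj (\<phi> x) * \<phi> x) else 0)"
      by (simp only: H4) (simp add: sum_distrib_left mult_ac)
    finally show ?thesis using n by simp
  qed
  show ?thesis using E1 E2 by (simp add: vec_eq_iff)
qed



definition "fAB = (\<lambda>(a::'a,b::'b,c::'c,d::'d). (a,b))"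
definition "gAB = (\<lambda>(a::'a,b::'b,c::'c,d::'d). (c,d))"
definition "hAB = (\<lambda>(a::'a,b::'b) (c::'c,d::'d). (a,b,c,d))"
definition "fBC = (\<lambda>(a::'a,b::'b,c::'c,d::'d). (b,c))"
definition "gBC = (\<lambda>(a::'a,b::'b,c::'c,d::'d). (a,d))"
definition "hBC = (\<lambda>(b::'b,c::'c) (a::'a,d::'d). (a,b,c,d))"

lemma AB_bij: "fAB (hAB p q) = p" "gAB (hAB p q) = q" "hAB (fAB i) (gAB i) = i"
  by (auto simp: fAB_def gAB_def hAB_def split: prod.splits)
lemma BC_bij: "fBC (hBC p q) = p" "gBC (hBC p q) = q" "hBC (fBC i) (gBC i) = i"
  by (auto simp: fBC_def gBC_def hBC_def split: prod.splits)

lemma rhoAB_red: "rhoAB \<Psi> = red fAB gAB hAB \<Psi>"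
  unfolding vec_eq_iff
  by (auto simp: rhoAB_def red_def fAB_def gAB_def hAB_def sum_UNIV_pair split: prod.splits)

lemma rhoBC_red: "rhoBC \<Psi> = red fBC gBC hBC \<Psi>"
  unfolding vec_eq_iff
  by (auto simp: rhoBC_def red_def fBC_def gBC_def hBC_def sum_UNIV_pair split: prod.splits)


lemma ex_nz: "(\<Sum>x\<in>UNIV. (cmod (\<psi> x))\<^sup>2) = 1 \<Longrightarrow> \<exists>x. \<psi> x \<noteq> 0"
  by (rule ccontr) simp

lemma norm1: "(\<Sum>x\<in>UNIV. (cmod (\<phi> x))\<^sup>2) = 1 \<Longrightarrow> (\<Sum>x\<in>UNIV. cnj (\<phi> x) * \<phi> x) = 1"
proof -
  assume h: "(\<Sum>x\<in>UNIV. (cmod (\<phi> x))\<^sup>2) = 1"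
  have "(\<Sum>x\<in>UNIV. cnj (\<phi> x) * \<phi> x) = (\<Sum>x\<in>UNIV. complex_of_real ((cmod (\<phi> x))\<^sup>2))"
    by (intro sum.cong refl) (simp add: complex_norm_square mult.commute del: of_real_power)
  also have "\<dots> = complex_of_real (\<Sum>x\<in>UNIV. (cmod (\<phi> x))\<^sup>2)" by simp
  finally show ?thesis using h by simp
qed

theorem mainTheorem11:
  fixes \<Psi> :: "('a::finite, 'b::finite, 'c::finite, 'd::finite) state"
    and \<alpha> \<beta> :: real
  assumes prod:
    "(\<exists>(\<psi> :: 'b \<times> 'c \<times> 'd \<Rightarrow> complex) (\<phi> :: 'a \<Rightarrow> complex).
        (\<Sum>x\<in>UNIV. (cmod (\<psi> x))\<^sup>2) = 1 \<and> (\<Sum>x\<in>UNIV. (cmod (\<phi> x))\<^sup>2) = 1 \<and>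
        (\<forall>a b c d. \<Psi> $ (a, b, c, d) = \<psi> (b, c, d) * \<phi> a))
   \<or> (\<exists>(\<psi> :: 'a \<times> 'c \<times> 'd \<Rightarrow> complex) (\<phi> :: 'b \<Rightarrow> complex).
        (\<Sum>x\<in>UNIV. (cmod (\<psi> x))\<^sup>2) = 1 \<and> (\<Sum>x\<in>UNIV. (cmod (\<phi> x))\<^sup>2) = 1 \<and>
        (\<forall>a b c d. \<Psi> $ (a, b, c, d) = \<psi> (a, c, d) * \<phi> b))
   \<or> (\<exists>(\<psi> :: 'a \<times> 'b \<times> 'd \<Rightarrow> complex) (\<phi> :: 'c \<Rightarrow> complex).
        (\<Sum>x\<in>UNIV. (cmod (\<psi> x))\<^sup>2) = 1 \<and> (\<Sum>x\<in>UNIV. (cmod (\<phi> x))\<^sup>2) = 1 \<and>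
        (\<forall>a b c d. \<Psi> $ (a, b, c, d) = \<psi> (a, b, d) * \<phi> c))
   \<or> (\<exists>(\<psi> :: 'a \<times> 'b \<times> 'c \<Rightarrow> complex) (\<phi> :: 'd \<Rightarrow> complex).
        (\<Sum>x\<in>UNIV. (cmod (\<psi> x))\<^sup>2) = 1 \<and> (\<Sum>x\<in>UNIV. (cmod (\<phi> x))\<^sup>2) = 1 \<and>
        (\<forall>a b c d. \<Psi> $ (a, b, c, d) = \<psi> (a, b, c) * \<phi> d))"
    and "\<alpha> > 0" and "\<beta> > 0"
  shows "Im (expect (mpow (rhoAB \<Psi>) \<alpha> ** mpow (rhoBC \<Psi>) \<beta>) \<Psi>) = 0
       \<and> Re (expect (mpow (rhoAB \<Psi>) \<alpha> ** mpow (rhoBC \<Psi>) \<beta>) \<Psi>) > 0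
       \<and> omega \<alpha> \<beta> \<Psi> = 1"
proof -
  define RAB where "RAB = red fAB gAB hAB \<Psi>"
  define RBC where "RBC = red fBC gBC hBC \<Psi>"
  define RCD where "RCD = red gAB fAB (\<lambda>q p. hAB p q) \<Psi>"
  define RAD where "RAD = red gBC fBC (\<lambda>q p. hBC p q) \<Psi>"
  have E: "expect (mpow (rhoAB \<Psi>) \<alpha> ** mpow (rhoBC \<Psi>) \<beta>) \<Psi>
      = cinner \<Psi> (mfun (\<lambda>x. x powr \<alpha>) RAB *v (mfun (\<lambda>x. x powr \<beta>) RBC *v \<Psi>))"
    by (simp add: expect_cinner matrix_vector_mul_assoc[symmetric] mpow_mfun rhoAB_red rhoBC_red RAB_def RBC_def)
  have hAB': "herm RAB" "herm RBC" "herm RCD" "herm RAD"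
    by (simp_all add: RAB_def RBC_def RCD_def RAD_def red_herm)
  have sAB: "\<forall>v. RAB *v v = 0 \<longrightarrow> cinner v \<Psi> = 0"
    unfolding RAB_def using red_supp[OF AB_bij] by blast
  have sBC: "\<forall>v. RBC *v v = 0 \<longrightarrow> cinner v \<Psi> = 0"
    unfolding RBC_def using red_supp[OF BC_bij] by blast
  have sCD: "\<forall>v. RCD *v v = 0 \<longrightarrow> cinner v \<Psi> = 0"
    unfolding RCD_def using red_supp[of gAB "\<lambda>q p. hAB p q" fAB] AB_bij by blast
  have sAD: "\<forall>v. RAD *v v = 0 \<longrightarrow> cinner v \<Psi> = 0"
    unfolding RAD_def using red_supp[of gBC "\<lambda>q p. hBC p q" fBC] BC_bij by blast
  have swAB: "mfun f RAB *v \<Psi> = mfun f RCD *v \<Psi>" for f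
    unfolding RAB_def RCD_def
    by (rule mfun_swap[OF red_herm red_herm red_comm[OF AB_bij] red_swap_eq[OF AB_bij]])
  have swBC: "mfun f RBC *v \<Psi> = mfun f RAD *v \<Psi>" for f
    unfolding RBC_def RAD_def
    by (rule mfun_swap[OF red_herm red_herm red_comm[OF BC_bij] red_swap_eq[OF BC_bij]])
  have EA: "cinner \<Psi> (mfun (\<lambda>x. x powr \<alpha>) RAB *v (mfun (\<lambda>x. x powr \<beta>) RBC *v \<Psi>))
     = cinner \<Psi> (mfun (\<lambda>x. x powr \<alpha>) RAB *v (mfun (\<lambda>x. x powr \<beta>) RAD *v \<Psi>))"
    by (simp add: swBC)
  have EC: "cinner \<Psi> (mfun (\<lambda>x. x powr \<alpha>) RAB *v (mfun (\<lambda>x. x powr \<beta>) L *v \<Psi>))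
     = cinner \<Psi> (mfun (\<lambda>x. x powr \<alpha>) RCD *v (mfun (\<lambda>x. x powr \<beta>) L *v \<Psi>))" for L
  proof -
    have "cinner \<Psi> (mfun (\<lambda>x. x powr \<alpha>) RAB *v (mfun (\<lambda>x. x powr \<beta>) L *v \<Psi>))
        = cinner (mfun (\<lambda>x. x powr \<alpha>) RAB *v \<Psi>) (mfun (\<lambda>x. x powr \<beta>) L *v \<Psi>)"
      by (rule mfun_cinner[OF hAB'(1)])
    also have "\<dots> = cinner (mfun (\<lambda>x. x powr \<alpha>) RCD *v \<Psi>) (mfun (\<lambda>x. x powr \<beta>) L *v \<Psi>)"
      by (simp add: swAB)
    also have "\<dots> = cinner \<Psi> (mfun (\<lambda>x. x powr \<alpha>) RCD *v (mfun (\<lambda>x. x powr \<beta>) L *v \<Psi>))"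
      by (rule mfun_cinner[OF hAB'(3), symmetric])
    finally show ?thesis .
  qed
  have main: "\<exists>r>0. cinner \<Psi> (mfun (\<lambda>x. x powr \<alpha>) RAB *v (mfun (\<lambda>x. x powr \<beta>) RBC *v \<Psi>)) = complex_of_real r"
    using prod
  proof (elim disjE exE conjE)
    fix \<psi> :: "'b \<times> 'c \<times> 'd \<Rightarrow> complex" and \<phi> :: "'a \<Rightarrow> complex"
    assume n1: "(\<Sum>x\<in>UNIV. (cmod (\<psi> x))\<^sup>2) = 1" and n2: "(\<Sum>x\<in>UNIV. (cmod (\<phi> x))\<^sup>2) = 1"
      and fac: "\<forall>a b c d. \<Psi> $ (a, b, c, d) = \<psi> (b, c, d) * \<phi> a"
    obtain x0 where x0: "\<psi> x0 \<noteq> 0" using ex_nz[OF n1] by blast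
    obtain y0 where y0: "\<phi> y0 \<noteq> 0" using ex_nz[OF n2] by blast
    obtain u v w where uvw: "x0 = (u, v, w)" by (cases x0)
    have nz: "\<Psi> \<noteq> 0"
    proof
      assume "\<Psi> = 0"
      then have "\<Psi> $ (y0, u, v, w) = 0" by simp
      then show False using fac x0 y0 uvw by simp
    qed
    have comm: "RAB ** RAD = RAD ** RAB"
    proof (rule commute4[where h="\<lambda>x y z w. (x,y,w,z)" and px="\<lambda>(a,b,c,d). a" and py="\<lambda>(a,b,c,d). b"
          and pz="\<lambda>(a,b,c,d). d" and pw="\<lambda>(a,b,c,d). c" and \<phi>=\<phi>
          and Ra="\<lambda>b b'. \<Sum>q\<in>UNIV. \<psi> (b, fst q, snd q) * cnj (\<psi> (b', fst q, snd q))" and Rb="\<lambda>d d'. \<Sum>q\<in>UNIV. \<psi> (fst q, snd q, d) * cnj (\<psi> (fst q, snd q, d'))"])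
      show "(\<Sum>x\<in>UNIV. cnj (\<phi> x) * \<phi> x) = 1" by (rule norm1[OF n2])
    next
      fix i j :: "'a \<times> 'b \<times> 'c \<times> 'd"
      show "RAB $ i $ j = (if (case i of (a,b,c,d) \<Rightarrow> d) = (case j of (a,b,c,d) \<Rightarrow> d) \<and> (case i of (a,b,c,d) \<Rightarrow> c) = (case j of (a,b,c,d) \<Rightarrow> c)
          then \<phi> (case i of (a,b,c,d) \<Rightarrow> a) * cnj (\<phi> (case j of (a,b,c,d) \<Rightarrow> a)) * ((\<lambda>b b'. \<Sum>q\<in>UNIV. \<psi> (b, fst q, snd q) * cnj (\<psi> (b', fst q, snd q)))) ((case i of (a,b,c,d) \<Rightarrow> b)) ((case j of (a,b,c,d) \<Rightarrow> b)) else 0)"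
        by (cases i; cases j) (auto simp: RAB_def red_def fAB_def gAB_def hAB_def fac sum_distrib_left mult_ac split_beta sum_UNIV_pair)
    next
      fix i j :: "'a \<times> 'b \<times> 'c \<times> 'd"
      show "RAD $ i $ j = (if (case i of (a,b,c,d) \<Rightarrow> b) = (case j of (a,b,c,d) \<Rightarrow> b) \<and> (case i of (a,b,c,d) \<Rightarrow> c) = (case j of (a,b,c,d) \<Rightarrow> c)
          then \<phi> (case i of (a,b,c,d) \<Rightarrow> a) * cnj (\<phi> (case j of (a,b,c,d) \<Rightarrow> a)) * ((\<lambda>d d'. \<Sum>q\<in>UNIV. \<psi> (fst q, snd q, d) * cnj (\<psi> (fst q, snd q, d')))) ((case i of (a,b,c,d) \<Rightarrow> d)) ((case j of (a,b,c,d) \<Rightarrow> d)) else 0)"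
        by (cases i; cases j) (auto simp: RAD_def red_def fBC_def gBC_def hBC_def fac sum_distrib_left mult_ac split_beta sum_UNIV_pair)
    qed (auto split: prod.splits)
    have "\<exists>r>0. cinner \<Psi> (mfun (\<lambda>x. x powr \<alpha>) RAB *v (mfun (\<lambda>x. x powr \<beta>) RAD *v \<Psi>)) = complex_of_real r"
      by (rule core_pos[OF hAB'(1) hAB'(4) comm sAB sAD nz])
    then show ?thesis by (subst EA)
  next
    fix \<psi> :: "'a \<times> 'c \<times> 'd \<Rightarrow> complex" and \<phi> :: "'b \<Rightarrow> complex"
    assume n1: "(\<Sum>x\<in>UNIV. (cmod (\<psi> x))\<^sup>2) = 1" and n2: "(\<Sum>x\<in>UNIV. (cmod (\<phi> x))\<^sup>2) = 1"
      and fac: "\<forall>a b c d. \<Psi> $ (a, b, c, d) = \<psi> (a, c, d) * \<phi> b"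
    obtain x0 where x0: "\<psi> x0 \<noteq> 0" using ex_nz[OF n1] by blast
    obtain y0 where y0: "\<phi> y0 \<noteq> 0" using ex_nz[OF n2] by blast
    obtain u v w where uvw: "x0 = (u, v, w)" by (cases x0)
    have nz: "\<Psi> \<noteq> 0"
    proof
      assume "\<Psi> = 0"
      then have "\<Psi> $ (u, y0, v, w) = 0" by simp
      then show False using fac x0 y0 uvw by simp
    qed
    have comm: "RAB ** RBC = RBC ** RAB"
    proof (rule commute4[where h="\<lambda>x y z w. (y,x,z,w)" and px="\<lambda>(a,b,c,d). b" and py="\<lambda>(a,b,c,d). a"
          and pz="\<lambda>(a,b,c,d). c" and pw="\<lambda>(a,b,c,d). d" and \<phi>=\<phi>
          and Ra="\<lambda>a a'. \<Sum>q\<in>UNIV. \<psi> (a, fst q, snd q) * cnj (\<psi> (a', fst q, snd q))" and Rb="\<lambda>c c'. \<Sum>q\<in>UNIV. \<psi> (fst q, c, snd q) * cnj (\<psi> (fst q, c', snd q))"])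
      show "(\<Sum>x\<in>UNIV. cnj (\<phi> x) * \<phi> x) = 1" by (rule norm1[OF n2])
    next
      fix i j :: "'a \<times> 'b \<times> 'c \<times> 'd"
      show "RAB $ i $ j = (if (case i of (a,b,c,d) \<Rightarrow> c) = (case j of (a,b,c,d) \<Rightarrow> c) \<and> (case i of (a,b,c,d) \<Rightarrow> d) = (case j of (a,b,c,d) \<Rightarrow> d)
          then \<phi> (case i of (a,b,c,d) \<Rightarrow> b) * cnj (\<phi> (case j of (a,b,c,d) \<Rightarrow> b)) * ((\<lambda>a a'. \<Sum>q\<in>UNIV. \<psi> (a, fst q, snd q) * cnj (\<psi> (a', fst q, snd q)))) ((case i of (a,b,c,d) \<Rightarrow> a)) ((case j of (a,b,c,d) \<Rightarrow> a)) else 0)"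
        by (cases i; cases j) (auto simp: RAB_def red_def fAB_def gAB_def hAB_def fac sum_distrib_left mult_ac split_beta sum_UNIV_pair)
    next
      fix i j :: "'a \<times> 'b \<times> 'c \<times> 'd"
      show "RBC $ i $ j = (if (case i of (a,b,c,d) \<Rightarrow> a) = (case j of (a,b,c,d) \<Rightarrow> a) \<and> (case i of (a,b,c,d) \<Rightarrow> d) = (case j of (a,b,c,d) \<Rightarrow> d)
          then \<phi> (case i of (a,b,c,d) \<Rightarrow> b) * cnj (\<phi> (case j of (a,b,c,d) \<Rightarrow> b)) * ((\<lambda>c c'. \<Sum>q\<in>UNIV. \<psi> (fst q, c, snd q) * cnj (\<psi> (fst q, c', snd q)))) ((case i of (a,b,c,d) \<Rightarrow> c)) ((case j of (a,b,c,d) \<Rightarrow> c)) else 0)"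
        by (cases i; cases j) (auto simp: RBC_def red_def fBC_def gBC_def hBC_def fac sum_distrib_left mult_ac split_beta sum_UNIV_pair)
    qed (auto split: prod.splits)
    have "\<exists>r>0. cinner \<Psi> (mfun (\<lambda>x. x powr \<alpha>) RAB *v (mfun (\<lambda>x. x powr \<beta>) RBC *v \<Psi>)) = complex_of_real r"
      by (rule core_pos[OF hAB'(1) hAB'(2) comm sAB sBC nz])
    then show ?thesis .
  next
    fix \<psi> :: "'a \<times> 'b \<times> 'd \<Rightarrow> complex" and \<phi> :: "'c \<Rightarrow> complex"
    assume n1: "(\<Sum>x\<in>UNIV. (cmod (\<psi> x))\<^sup>2) = 1" and n2: "(\<Sum>x\<in>UNIV. (cmod (\<phi> x))\<^sup>2) = 1"
      and fac: "\<forall>a b c d. \<Psi> $ (a, b, c, d) = \<psi> (a, b, d) * \<phi> c"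
    obtain x0 where x0: "\<psi> x0 \<noteq> 0" using ex_nz[OF n1] by blast
    obtain y0 where y0: "\<phi> y0 \<noteq> 0" using ex_nz[OF n2] by blast
    obtain u v w where uvw: "x0 = (u, v, w)" by (cases x0)
    have nz: "\<Psi> \<noteq> 0"
    proof
      assume "\<Psi> = 0"
      then have "\<Psi> $ (u, v, y0, w) = 0" by simp
      then show False using fac x0 y0 uvw by simp
    qed
    have comm: "RCD ** RBC = RBC ** RCD"
    proof (rule commute4[where h="\<lambda>x y z w. (w,z,x,y)" and px="\<lambda>(a,b,c,d). c" and py="\<lambda>(a,b,c,d). d"
          and pz="\<lambda>(a,b,c,d). b" and pw="\<lambda>(a,b,c,d). a" and \<phi>=\<phi>
          and Ra="\<lambda>d d'. \<Sum>q\<in>UNIV. \<psi> (fst q, snd q, d) * cnj (\<psi> (fst q, snd q, d'))" and Rb="\<lambda>b b'. \<Sum>q\<in>UNIV. \<psi> (fst q, b, snd q) * cnj (\<psi> (fst q, b', snd q))"])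
      show "(\<Sum>x\<in>UNIV. cnj (\<phi> x) * \<phi> x) = 1" by (rule norm1[OF n2])
    next
      fix i j :: "'a \<times> 'b \<times> 'c \<times> 'd"
      show "RCD $ i $ j = (if (case i of (a,b,c,d) \<Rightarrow> b) = (case j of (a,b,c,d) \<Rightarrow> b) \<and> (case i of (a,b,c,d) \<Rightarrow> a) = (case j of (a,b,c,d) \<Rightarrow> a)
          then \<phi> (case i of (a,b,c,d) \<Rightarrow> c) * cnj (\<phi> (case j of (a,b,c,d) \<Rightarrow> c)) * ((\<lambda>d d'. \<Sum>q\<in>UNIV. \<psi> (fst q, snd q, d) * cnj (\<psi> (fst q, snd q, d')))) ((case i of (a,b,c,d) \<Rightarrow> d)) ((case j of (a,b,c,d) \<Rightarrow> d)) else 0)"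
        by (cases i; cases j) (auto simp: RCD_def red_def fAB_def gAB_def hAB_def fac sum_distrib_left mult_ac split_beta sum_UNIV_pair)
    next
      fix i j :: "'a \<times> 'b \<times> 'c \<times> 'd"
      show "RBC $ i $ j = (if (case i of (a,b,c,d) \<Rightarrow> d) = (case j of (a,b,c,d) \<Rightarrow> d) \<and> (case i of (a,b,c,d) \<Rightarrow> a) = (case j of (a,b,c,d) \<Rightarrow> a)
          then \<phi> (case i of (a,b,c,d) \<Rightarrow> c) * cnj (\<phi> (case j of (a,b,c,d) \<Rightarrow> c)) * ((\<lambda>b b'. \<Sum>q\<in>UNIV. \<psi> (fst q, b, snd q) * cnj (\<psi> (fst q, b', snd q)))) ((case i of (a,b,c,d) \<Rightarrow> b)) ((case j of (a,b,c,d) \<Rightarrow> b)) else 0)"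
        by (cases i; cases j) (auto simp: RBC_def red_def fBC_def gBC_def hBC_def fac sum_distrib_left mult_ac split_beta sum_UNIV_pair)
    qed (auto split: prod.splits)
    have "\<exists>r>0. cinner \<Psi> (mfun (\<lambda>x. x powr \<alpha>) RCD *v (mfun (\<lambda>x. x powr \<beta>) RBC *v \<Psi>)) = complex_of_real r"
      by (rule core_pos[OF hAB'(3) hAB'(2) comm sCD sBC nz])
    then show ?thesis by (subst EC)
  next
    fix \<psi> :: "'a \<times> 'b \<times> 'c \<Rightarrow> complex" and \<phi> :: "'d \<Rightarrow> complex"
    assume n1: "(\<Sum>x\<in>UNIV. (cmod (\<psi> x))\<^sup>2) = 1" and n2: "(\<Sum>x\<in>UNIV. (cmod (\<phi> x))\<^sup>2) = 1"
      and fac: "\<forall>a b c d. \<Psi> $ (a, b, c, d) = \<psi> (a, b, c) * \<phi> d"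
    obtain x0 where x0: "\<psi> x0 \<noteq> 0" using ex_nz[OF n1] by blast
    obtain y0 where y0: "\<phi> y0 \<noteq> 0" using ex_nz[OF n2] by blast
    obtain u v w where uvw: "x0 = (u, v, w)" by (cases x0)
    have nz: "\<Psi> \<noteq> 0"
    proof
      assume "\<Psi> = 0"
      then have "\<Psi> $ (u, v, w, y0) = 0" by simp
      then show False using fac x0 y0 uvw by simp
    qed
    have comm: "RCD ** RAD = RAD ** RCD"
    proof (rule commute4[where h="\<lambda>x y z w. (z,w,y,x)" and px="\<lambda>(a,b,c,d). d" and py="\<lambda>(a,b,c,d). c"
          and pz="\<lambda>(a,b,c,d). a" and pw="\<lambda>(a,b,c,d). b" and \<phi>=\<phi>
          and Ra="\<lambda>c c'. \<Sum>q\<in>UNIV. \<psi> (fst q, snd q, c) * cnj (\<psi> (fst q, snd q, c'))"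
          and Rb="\<lambda>a a'. \<Sum>q\<in>UNIV. \<psi> (a, fst q, snd q) * cnj (\<psi> (a', fst q, snd q))"])
      show "(\<Sum>x\<in>UNIV. cnj (\<phi> x) * \<phi> x) = 1" by (rule norm1[OF n2])
    next
      fix i j :: "'a \<times> 'b \<times> 'c \<times> 'd"
      show "RCD $ i $ j = (if (case i of (a,b,c,d) \<Rightarrow> a) = (case j of (a,b,c,d) \<Rightarrow> a) \<and> (case i of (a,b,c,d) \<Rightarrow> b) = (case j of (a,b,c,d) \<Rightarrow> b)
          then \<phi> (case i of (a,b,c,d) \<Rightarrow> d) * cnj (\<phi> (case j of (a,b,c,d) \<Rightarrow> d)) *
            (\<Sum>q\<in>UNIV. \<psi> (fst q, snd q, case i of (a,b,c,d) \<Rightarrow> c) * cnj (\<psi> (fst q, snd q, case j of (a,b,c,d) \<Rightarrow> c))) else 0)"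
        by (cases i; cases j) (auto simp: RCD_def red_def fAB_def gAB_def hAB_def fac sum_distrib_left mult_ac split_beta sum_UNIV_pair)
    next
      fix i j :: "'a \<times> 'b \<times> 'c \<times> 'd"
      show "RAD $ i $ j = (if (case i of (a,b,c,d) \<Rightarrow> c) = (case j of (a,b,c,d) \<Rightarrow> c) \<and> (case i of (a,b,c,d) \<Rightarrow> b) = (case j of (a,b,c,d) \<Rightarrow> b)
          then \<phi> (case i of (a,b,c,d) \<Rightarrow> d) * cnj (\<phi> (case j of (a,b,c,d) \<Rightarrow> d)) *
            (\<Sum>q\<in>UNIV. \<psi> (case i of (a,b,c,d) \<Rightarrow> a, fst q, snd q) * cnj (\<psi> (case j of (a,b,c,d) \<Rightarrow> a, fst q, snd q))) else 0)"
        by (cases i; cases j) (auto simp: RAD_def red_def fBC_def gBC_def hBC_def fac sum_distrib_left mult_ac split_beta sum_UNIV_pair)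
    qed (auto split: prod.splits)
    have "\<exists>r>0. cinner \<Psi> (mfun (\<lambda>x. x powr \<alpha>) RCD *v (mfun (\<lambda>x. x powr \<beta>) RAD *v \<Psi>)) = complex_of_real r"
      by (rule core_pos[OF hAB'(3,4) comm sCD sAD nz])
    then show ?thesis by (subst EA, subst EC)
  qed
  then obtain r where r: "r > 0" "expect (mpow (rhoAB \<Psi>) \<alpha> ** mpow (rhoBC \<Psi>) \<beta>) \<Psi> = complex_of_real r"
    using E by auto
  show ?thesis using r by (simp add: omega_def Let_def)
qed


end
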